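(* Let $T$ be a contraction on a Hilbert space $H$ such that $\sqrt{1-TT^*}$ has finite rank. Define the operator $Q$ on $H \oplus \operatorname{Range}(1-TT^* )$ by the operator matrix $$Q := \begin{bmatrix} T & \sqrt{1-TT^*} \\ 0 & 0 \end{bmatrix}.$$ Then $Q$ is a partial isometry, $K(Q) = K(T)$, $\operatorname{rank}(1-QQ^* ) = \operatorname{rank}(1-TT^* )$, and $\operatorname{rank}(1-Q^*Q) = \operatorname{rank}(1-T^*T)$ (where both sides of the last equality may be infinite).
   Context: For a contraction $T$ on a Hilbert space $H$, write $\Delta_T := \sqrt{1-TT^*}$. When $\Delta_T$ has finite rank, the curvature of $T$ is $$K(T) := \int_{|z|=1} \lim_{r\uparrow 1} (1-r^2)\, \operatorname{tr}\big(\Delta_T (1-rzT^* )^{-1}(1-r\bar z T)^{-1}\Delta_T\big)\, dz,$$ where $dz$ denotes normalized arc-length (Haar probability) measure on the unit circle; the limit exists for almost every $z$ and is bounded by $\operatorname{rank}\Delta_T$. Note that $\operatorname{Range}\sqrt{1-TT^*} = \operatorname{Range}(1-TT^* )$ when the rank is finite. *)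

theory Defs
  imports "HOL-Analysis.Analysis"
begin

text \<open>The library only provides real inner product spaces, so complex Hilbert spaces
are introduced here as a type class.\<close>

class complex_vector = real_vector +
  fixes scaleC :: "complex \<Rightarrow> 'a \<Rightarrow> 'a"  (infixr \<open>*\<^sub>C\<close> 75)
  assumes scaleC_add_right: "a *\<^sub>C (x + y) = a *\<^sub>C x + a *\<^sub>C y"
    and scaleC_add_left: "(a + b) *\<^sub>C x = a *\<^sub>C x + b *\<^sub>C x"
    and scaleC_scaleC: "a *\<^sub>C (b *\<^sub>C x) = (a * b) *\<^sub>C x"
    and scaleC_one: "1 *\<^sub>C x = x"
    and scaleR_scaleC: "r *\<^sub>R x = complex_of_real r *\<^sub>C x"

class complex_inner = complex_vector + real_normed_vector +
  fixes cinner :: "'a \<Rightarrow> 'a \<Rightarrow> complex"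
  assumes cinner_commute: "cinner x y = cnj (cinner y x)"
    and cinner_add_left: "cinner (x + y) z = cinner x z + cinner y z"
    and cinner_scaleC_left: "cinner (a *\<^sub>C x) y = a * cinner x y"
    and cinner_ge_zero: "0 \<le> Re (cinner x x)"
    and cinner_eq_zero_iff: "cinner x x = 0 \<longleftrightarrow> x = 0"
    and norm_eq_sqrt_cinner: "norm x = sqrt (Re (cinner x x))"

class chilbert = complex_inner + complete_space

global_interpretation complex_vector: vector_space "scaleC :: complex \<Rightarrow> 'a \<Rightarrow> 'a :: complex_vector"
  defines cspan_raw_def: cspan = complex_vector.span
    and cdim_raw_def: cdim = complex_vector.dim
  by unfold_locales (auto simp: scaleC_add_right scaleC_add_left scaleC_scaleC scaleC_one)

instantiation prod :: (complex_vector, complex_vector) complex_vector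
begin
definition scaleC_prod_def: "a *\<^sub>C x = (a *\<^sub>C fst x, a *\<^sub>C snd x)"
instance
  by standard (auto simp: scaleC_prod_def scaleC_add_right scaleC_add_left scaleC_scaleC
      scaleC_one scaleR_prod_def scaleR_scaleC)
end

lemma cinner_self_real: "cinner x x = complex_of_real (Re (cinner x x))"
proof -
  have "cinner x x = cnj (cinner x x)" by (rule cinner_commute)
  hence "Im (cinner x x) = 0" by (metis cnj.simps(2) neg_equal_zero)
  thus ?thesis by (simp add: complex_eq_iff)
qed

lemma cinner_zero_zero: "cinner 0 0 = 0"
  using cinner_eq_zero_iff by blast

lemma Re_cinner_self_norm: "Re (cinner x x) = (norm x)\<^sup>2"
  by (simp add: norm_eq_sqrt_cinner cinner_ge_zero)

instantiation prod :: (complex_inner, complex_inner) complex_inner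
begin
definition cinner_prod_def: "cinner x y = cinner (fst x) (fst y) + cinner (snd x) (snd y)"
instance
proof
  fix x y z :: "'a \<times> 'b" and a :: complex
  show "cinner x y = cnj (cinner y x)"
    by (simp add: cinner_prod_def) (metis cinner_commute)
  show "cinner (x + y) z = cinner x z + cinner y z"
    by (simp add: cinner_prod_def cinner_add_left)
  show "cinner (a *\<^sub>C x) y = a * cinner x y"
    by (simp add: cinner_prod_def scaleC_prod_def cinner_scaleC_left distrib_left)
  show "0 \<le> Re (cinner x x)"
    by (simp add: cinner_prod_def cinner_ge_zero add_nonneg_nonneg)
  show "cinner x x = 0 \<longleftrightarrow> x = 0"
  proof
    assume h: "cinner x x = 0"
    have "Re (cinner (fst x) (fst x)) + Re (cinner (snd x) (snd x)) = 0"
      using h by (metis cinner_prod_def plus_complex.sel(1) zero_complex.sel(1))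
    hence "Re (cinner (fst x) (fst x)) = 0 \<and> Re (cinner (snd x) (snd x)) = 0"
      using cinner_ge_zero[of "fst x"] cinner_ge_zero[of "snd x"] by linarith
    hence "cinner (fst x) (fst x) = 0 \<and> cinner (snd x) (snd x) = 0"
      by (metis cinner_self_real of_real_0)
    thus "x = 0" by (simp add: cinner_eq_zero_iff prod_eq_iff)
  qed (simp add: cinner_prod_def cinner_zero_zero)
  show "norm x = sqrt (Re (cinner x x))"
    by (simp add: norm_prod_def cinner_prod_def Re_cinner_self_norm)
qed
end

instance prod :: (chilbert, chilbert) chilbert ..

text \<open>An operator on the Hilbert space \<open>M\<close> (a closed complex subspace of the ambient
type, e.g. \<open>UNIV\<close>) is represented by a function \<open>'a \<Rightarrow> 'a\<close>; only its values on \<open>M\<close> matter.\<close>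

definition bop_on :: "'a::chilbert set \<Rightarrow> ('a \<Rightarrow> 'a) \<Rightarrow> bool" where
  "bop_on M A \<longleftrightarrow> (\<forall>x\<in>M. A x \<in> M) \<and> (\<forall>x\<in>M. \<forall>y\<in>M. A (x + y) = A x + A y)
     \<and> (\<forall>c. \<forall>x\<in>M. A (c *\<^sub>C x) = c *\<^sub>C A x) \<and> (\<exists>K. \<forall>x\<in>M. norm (A x) \<le> K * norm x)"

text \<open>Hilbert space adjoint (unique on \<open>M\<close> by the Riesz representation theorem).\<close>
definition adjoint_on :: "'a::chilbert set \<Rightarrow> ('a \<Rightarrow> 'a) \<Rightarrow> ('a \<Rightarrow> 'a)" where
  "adjoint_on M A = (SOME B. (\<forall>y\<in>M. B y \<in> M) \<and> (\<forall>x\<in>M. \<forall>y\<in>M. cinner (A x) y = cinner x (B y)))"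

definition inv_on :: "'a::chilbert set \<Rightarrow> ('a \<Rightarrow> 'a) \<Rightarrow> ('a \<Rightarrow> 'a)" where
  "inv_on M A = (SOME B. \<forall>x\<in>M. B x \<in> M \<and> A (B x) = x \<and> B (A x) = x)"

definition sqrt_on :: "'a::chilbert set \<Rightarrow> ('a \<Rightarrow> 'a) \<Rightarrow> ('a \<Rightarrow> 'a)" where
  "sqrt_on M P = (SOME S. bop_on M S \<and> (\<forall>x\<in>M. Im (cinner (S x) x) = 0 \<and> 0 \<le> Re (cinner (S x) x))
        \<and> (\<forall>x\<in>M. S (S x) = P x))"

definition defect_on :: "'a::chilbert set \<Rightarrow> ('a \<Rightarrow> 'a) \<Rightarrow> ('a \<Rightarrow> 'a)" where
  "defect_on M T = sqrt_on M (\<lambda>x. x - T (adjoint_on M T x))"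

definition rank_on :: "'a::chilbert set \<Rightarrow> ('a \<Rightarrow> 'a) \<Rightarrow> enat" where
  "rank_on M A = (if \<exists>B. finite B \<and> A ` M \<subseteq> cspan B then enat (cdim (A ` M)) else \<infinity>)"

definition corthonormal :: "'a::chilbert set \<Rightarrow> bool" where
  "corthonormal B \<longleftrightarrow> (\<forall>e\<in>B. cinner e e = 1) \<and> (\<forall>e\<in>B. \<forall>f\<in>B. e \<noteq> f \<longrightarrow> cinner e f = 0)"

text \<open>Trace of a finite rank operator on \<open>M\<close>: computed in any finite orthonormal
system in \<open>M\<close> whose span contains the range (this is independent of the choice).\<close>
definition trace_on :: "'a::chilbert set \<Rightarrow> ('a \<Rightarrow> 'a) \<Rightarrow> complex" where
  "trace_on M A = (let B = (SOME B. finite B \<and> B \<subseteq> M \<and> corthonormal B \<and> A ` M \<subseteq> cspan B)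
     in (\<Sum>e\<in>B. cinner (A e) e))"

definition partial_isometry_on :: "'a::chilbert set \<Rightarrow> ('a \<Rightarrow> 'a) \<Rightarrow> bool" where
  "partial_isometry_on M Q \<longleftrightarrow> bop_on M Q \<and>
     (\<forall>x\<in>M. (\<forall>y\<in>M. Q y = 0 \<longrightarrow> cinner x y = 0) \<longrightarrow> norm (Q x) = norm x)"

text \<open>Curvature; the normalized Haar measure on the circle is written as
\<open>dt/(2\<pi>)\<close> on \<open>[0, 2\<pi>]\<close> with \<open>z = e^{it}\<close>.\<close>
definition curvature_on :: "'a::chilbert set \<Rightarrow> ('a \<Rightarrow> 'a) \<Rightarrow> complex" where
  "curvature_on M T =
     (let D = defect_on M T; Ts = adjoint_on M T;
          k = (\<lambda>z::complex. Lim (at_left (1::real))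
                 (\<lambda>r. complex_of_real (1 - r\<^sup>2) *
                    trace_on M (\<lambda>x. D (inv_on M (\<lambda>y. y - (complex_of_real r * z) *\<^sub>C Ts y)
                                   (inv_on M (\<lambda>y. y - (complex_of_real r * cnj z) *\<^sub>C T y) (D x))))))
      in complex_of_real (1 / (2 * pi)) * (LINT t:{0..2*pi}|lborel. k (cis t)))"

end

theory Submission
  imports Defs "HOL-Real_Asymp.Real_Asymp" "HOL-Computational_Algebra.Formal_Power_Series"
begin

lemma cinner_add_right: "cinner x (y + z) = cinner x y + cinner x z"
proof -
  have "cinner x (y + z) = cnj (cinner (y + z) x)" by (rule cinner_commute)
  also have "\<dots> = cnj (cinner y x) + cnj (cinner z x)" by (simp add: cinner_add_left)
  finally show ?thesis by (simp add: cinner_commute[of y x] cinner_commute[of z x])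
qed

lemma cinner_scaleC_right: "cinner x (a *\<^sub>C y) = cnj a * cinner x y"
proof -
  have "cinner x (a *\<^sub>C y) = cnj (cinner (a *\<^sub>C y) x)" by (rule cinner_commute)
  also have "\<dots> = cnj a * cnj (cinner y x)" by (simp add: cinner_scaleC_left)
  finally show ?thesis by (simp add: cinner_commute[of y x])
qed

lemma cinner_zero_left[simp]: "cinner 0 y = 0"
proof -
  have "cinner (0 + 0) y = cinner 0 y + cinner 0 y" by (rule cinner_add_left)
  then show ?thesis by simp
qed

lemma cinner_zero_right[simp]: "cinner x 0 = 0"
  by (subst cinner_commute) simp

lemma cinner_minus_left: "cinner (- x) y = - cinner x y"
proof -
  have "cinner (x + - x) y = cinner x y + cinner (- x) y" by (rule cinner_add_left)
  then show ?thesis by (simp add: eq_neg_iff_add_eq_0 add.commute)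
qed

lemma cinner_minus_right: "cinner x (- y) = - cinner x y"
  by (subst cinner_commute) (simp add: cinner_minus_left cinner_commute[of y x])

lemma cinner_diff_left: "cinner (x - y) z = cinner x z - cinner y z"
  using cinner_add_left[of x "-y" z] by (simp add: cinner_minus_left)

lemma cinner_diff_right: "cinner x (y - z) = cinner x y - cinner x z"
  using cinner_add_right[of x y "-z"] by (simp add: cinner_minus_right)

lemma cinner_sum_left: "cinner (\<Sum>i\<in>A. f i) y = (\<Sum>i\<in>A. cinner (f i) y)"
  by (induction A rule: infinite_finite_induct) (auto simp: cinner_add_left)

lemma cinner_sum_right: "cinner x (\<Sum>i\<in>A. f i) = (\<Sum>i\<in>A. cinner x (f i))"
  by (induction A rule: infinite_finite_induct) (auto simp: cinner_add_right)

lemma cinner_self_norm: "cinner x x = complex_of_real ((norm x)\<^sup>2)"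
  using cinner_self_real[of x] by (simp add: Re_cinner_self_norm)

lemma Im_cinner_self[simp]: "Im (cinner x x) = 0"
  by (simp add: cinner_self_norm)

lemma scaleC_real: "complex_of_real r *\<^sub>C x = r *\<^sub>R x"
  by (simp add: scaleR_scaleC)

lemma cinner_scaleR_left: "cinner (r *\<^sub>R x) y = complex_of_real r * cinner x y"
  by (simp add: scaleR_scaleC cinner_scaleC_left)

lemma cinner_scaleR_right: "cinner x (r *\<^sub>R y) = complex_of_real r * cinner x y"
  by (simp add: scaleR_scaleC cinner_scaleC_right)

lemma norm_sq_expand: "(norm (x + y))\<^sup>2 = (norm x)\<^sup>2 + (norm y)\<^sup>2 + 2 * Re (cinner x y)"
proof -
  have "Re (cinner (x+y) (x+y)) = Re (cinner x x) + Re (cinner y y) + Re (cinner x y) + Re (cinner y x)"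
    by (simp add: cinner_add_left cinner_add_right)
  moreover have "Re (cinner y x) = Re (cinner x y)"
    by (subst cinner_commute) simp
  ultimately show ?thesis by (simp add: Re_cinner_self_norm)
qed

lemma norm_sq_diff: "(norm (x - y))\<^sup>2 = (norm x)\<^sup>2 + (norm y)\<^sup>2 - 2 * Re (cinner x y)"
  using norm_sq_expand[of x "-y"] by (simp add: cinner_minus_right)

lemma cauchy_schwarz_c: "cmod (cinner x y) \<le> norm x * norm y"
proof (cases "y = 0")
  case True then show ?thesis by simp
next
  case False
  define c where "c = cinner x y / complex_of_real ((norm y)\<^sup>2)"
  have ny: "norm y > 0" using False by simp
  have "0 \<le> Re (cinner (x - c *\<^sub>C y) (x - c *\<^sub>C y))" by (rule cinner_ge_zero)
  also have "cinner (x - c *\<^sub>C y) (x - c *\<^sub>C y) = cinner x x - cnj c * cinner x y - c * cinner y x + c * cnj c * cinner y y"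
    by (simp add: cinner_diff_left cinner_diff_right cinner_scaleC_left cinner_scaleC_right algebra_simps)
  also have "\<dots> = cinner x x - cnj c * cinner x y"
    using ny by (simp add: c_def cinner_self_norm cinner_commute[of y x] power2_eq_square field_simps)
  finally have "0 \<le> Re (cinner x x - cnj c * cinner x y)" .
  moreover have "Re (cnj c * cinner x y) = (cmod (cinner x y))\<^sup>2 / (norm y)\<^sup>2"
  proof -
    have "cnj c * cinner x y = (cnj (cinner x y) * cinner x y) / complex_of_real ((norm y)\<^sup>2)"
      by (simp add: c_def)
    also have "\<dots> = complex_of_real ((cmod (cinner x y))\<^sup>2 / (norm y)\<^sup>2)"
      using complex_norm_square[of "cinner x y"] by (simp add: mult.commute)
    finally show ?thesis by simp
  qed
  ultimately have "(cmod (cinner x y))\<^sup>2 / (norm y)\<^sup>2 \<le> (norm x)\<^sup>2"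
    by (simp add: Re_cinner_self_norm)
  then have "(cmod (cinner x y))\<^sup>2 \<le> (norm x)\<^sup>2 * (norm y)\<^sup>2"
    using ny by (simp add: divide_le_eq)
  then have "(cmod (cinner x y))\<^sup>2 \<le> (norm x * norm y)\<^sup>2"
    by (simp add: power_mult_distrib)
  then show ?thesis
    using power2_le_imp_le[of "cmod (cinner x y)" "norm x * norm y"] by simp
qed

lemma norm_scaleC: "norm (a *\<^sub>C (x::'a::complex_inner)) = cmod a * norm x"
proof -
  have "(norm (a *\<^sub>C x))\<^sup>2 = Re (cinner (a *\<^sub>C x) (a *\<^sub>C x))" by (simp add: Re_cinner_self_norm)
  also have "\<dots> = Re (a * cnj a * cinner x x)" by (simp add: cinner_scaleC_left cinner_scaleC_right mult.assoc)
  also have "\<dots> = (cmod a * norm x)\<^sup>2"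
    by (simp add: cinner_self_norm complex_mult_cnj power_mult_distrib cmod_power2)
  finally show ?thesis
    using power2_eq_iff_nonneg[of "norm (a *\<^sub>C x)" "cmod a * norm x"] by simp
qed

lemma cinner_eq_zero_self: "cinner x x = 0 \<longleftrightarrow> x = 0" by (rule cinner_eq_zero_iff)

lemma cinner_ext_zero: "(\<And>y. cinner x y = 0) \<Longrightarrow> x = 0"
  using cinner_eq_zero_iff by blast

lemma bounded_linear_cinner_left: "bounded_linear (\<lambda>x. cinner x y)"
proof (rule bounded_linear_intro[where K="norm y"])
  show "cinner (x + z) y = cinner x y + cinner z y" for x z by (rule cinner_add_left)
  show "cinner (r *\<^sub>R x) y = r *\<^sub>R cinner x y" for r x by (simp add: cinner_scaleR_left scaleR_conv_of_real)
  show "norm (cinner x y) \<le> norm x * norm y" for x using cauchy_schwarz_c[of x y] by simp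
qed

lemma bounded_linear_cinner_right: "bounded_linear (\<lambda>y. cnj (cinner x y))"
  using bounded_linear_cinner_left[of x] by (subst cinner_commute[of x]) simp

lemma quad_nonneg_imp: fixes a b :: real
  assumes "\<forall>s. 0 \<le> a * s\<^sup>2 + b * s" shows "b = 0"
proof (rule ccontr)
  assume b: "b \<noteq> 0"
  define s where "s = - b / (2 * (\<bar>a\<bar> + 1)) "
  have s0: "s * b < 0" using b by (simp add: s_def field_simps) (smt (verit) mult_pos_pos zero_less_power2 power2_eq_square)
  have "a * s\<^sup>2 + b * s \<le> \<bar>a\<bar> * s\<^sup>2 + b * s" by (simp add: abs_le_square_iff mult_right_mono)
  also have "\<bar>a\<bar> * s\<^sup>2 + b * s = s * (\<bar>a\<bar> * s + b)" by (simp add: power2_eq_square algebra_simps)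
  also have "\<dots> < 0"
  proof -
    have "\<bar>a\<bar> * s + b = b * (1 - \<bar>a\<bar> / (2 * (\<bar>a\<bar> + 1)))"
      by (simp add: s_def field_simps)
    moreover have "1 - \<bar>a\<bar> / (2 * (\<bar>a\<bar> + 1)) > 0" by (simp add: field_simps)
    ultimately show ?thesis using s0
      by (metis mult.assoc mult.commute mult_neg_pos)
  qed
  finally show False using assms by (meson not_le)
qed

lemma parallelogram_c: "(norm ((x::'a::complex_inner) - y))\<^sup>2 = 2 * (norm x)\<^sup>2 + 2 * (norm y)\<^sup>2 - (norm (x + y))\<^sup>2"
  using norm_sq_expand[of x y] norm_sq_diff[of x y] by simp

lemma riesz_c:
  fixes \<phi> :: "'a::chilbert \<Rightarrow> complex"
  assumes add: "\<And>x y. \<phi> (x + y) = \<phi> x + \<phi> y"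
    and sc: "\<And>c x. \<phi> (c *\<^sub>C x) = c * \<phi> x"
    and bd: "\<And>x. cmod (\<phi> x) \<le> K * norm x"
  shows "\<exists>v. \<forall>x. \<phi> x = cinner x v"
proof (cases "\<forall>x. \<phi> x = 0")
  case True then show ?thesis by (intro exI[of _ 0]) simp
next
  case False
  then obtain x0 where x0: "\<phi> x0 \<noteq> 0" by auto
  have bl: "bounded_linear \<phi>"
  proof (rule bounded_linear_intro[where K=K])
    show "\<phi> (r *\<^sub>R x) = r *\<^sub>R \<phi> x" for r x
      by (simp add: scaleR_scaleC sc scaleR_conv_of_real)
  qed (auto simp: add bd mult.commute)
  have phi0: "\<phi> 0 = 0" using add[of 0 0] by simp
  define C where "C = {x. \<phi> x = 1}"
  have C_ne: "(inverse (\<phi> x0)) *\<^sub>C x0 \<in> C" using x0 by (simp add: C_def sc)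
  define d where "d = Inf (norm ` C)"
  have bddC: "bdd_below (norm ` C)" by (rule bdd_belowI[of _ 0]) auto
  have d_le: "d \<le> norm c" if "c \<in> C" for c
    unfolding d_def using bddC that by (simp add: cInf_lower)
  have d0: "0 \<le> d" unfolding d_def using C_ne by (intro cInf_greatest) auto
  have "\<exists>x. x \<in> C \<and> norm x < d + 1 / (real n + 1)" for n
  proof -
    have "Inf (norm ` C) < d + 1 / (real n + 1)" unfolding d_def by (simp add: add_pos_pos)
    then obtain t where "t \<in> norm ` C" "t < d + 1 / (real n + 1)"
      using cInf_lessD[of "norm ` C"] C_ne by blast
    then show ?thesis by auto
  qed
  then obtain xs where xsC: "\<And>n. xs n \<in> C" and xsd: "\<And>n. norm (xs n) < d + 1 / (real n + 1)"
    by metis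
  define e where "e n = (2 * d + 1) / (real n + 1)" for n
  have sq: "(norm (xs n))\<^sup>2 \<le> d\<^sup>2 + e n" for n
  proof -
    have a: "norm (xs n) \<le> d + 1 / (real n + 1)" using xsd[of n] by simp
    have "(norm (xs n))\<^sup>2 \<le> (d + 1 / (real n + 1))\<^sup>2"
      using a by (simp add: power_mono)
    also have "\<dots> = d\<^sup>2 + (2 * d + 1 / (real n + 1)) * (1 / (real n + 1))"
      by (simp add: power2_eq_square algebra_simps)
    also have "\<dots> = d\<^sup>2 + (2 * d + 1 / (real n + 1)) / (real n + 1)"
      by simp
    also have "\<dots> \<le> d\<^sup>2 + e n"
      unfolding e_def by (intro add_left_mono divide_right_mono) (auto simp: field_simps)
    finally show ?thesis .
  qed
  have mid: "(norm (xs m + xs n))\<^sup>2 \<ge> 4 * d\<^sup>2" for m n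
  proof -
    have "(1/2::complex) *\<^sub>C (xs m + xs n) \<in> C"
      using xsC[of m] xsC[of n] by (simp add: C_def sc add)
    then have "d \<le> norm ((1/2::complex) *\<^sub>C (xs m + xs n))" by (rule d_le)
    also have "\<dots> = norm (xs m + xs n) / 2" by (simp add: norm_scaleC)
    finally have "2 * d \<le> norm (xs m + xs n)" by simp
    then have "(2 * d)\<^sup>2 \<le> (norm (xs m + xs n))\<^sup>2" using d0 by (intro power_mono) auto
    then show ?thesis by (simp add: power2_eq_square)
  qed
  have cd: "(norm (xs m - xs n))\<^sup>2 \<le> 2 * e m + 2 * e n" for m n
    using parallelogram_c[of "xs m" "xs n"] sq[of m] sq[of n] mid[of m n] by simp
  have e_lim: "e \<longlonglongrightarrow> 0"
    unfolding e_def by real_asymp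
  have "Cauchy xs"
  proof (rule metric_CauchyI)
    fix eps :: real assume eps: "eps > 0"
    have "\<forall>\<^sub>F n in sequentially. e n < eps\<^sup>2 / 4"
      using e_lim eps by (intro order_tendstoD(2)) auto
    then obtain N where N: "\<And>n. n \<ge> N \<Longrightarrow> e n < eps\<^sup>2 / 4"
      by (auto simp: eventually_sequentially)
    have "dist (xs m) (xs n) < eps" if "m \<ge> N" "n \<ge> N" for m n
    proof -
      have "(norm (xs m - xs n))\<^sup>2 < eps\<^sup>2"
        using cd[of m n] N[OF that(1)] N[OF that(2)] by simp
      then have "norm (xs m - xs n) < eps"
        using eps by (simp add: power2_less_imp_less)
      then show ?thesis by (simp add: dist_norm)
    qed
    then show "\<exists>M. \<forall>m\<ge>M. \<forall>n\<ge>M. dist (xs m) (xs n) < eps" by blast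
  qed
  then obtain L where L: "xs \<longlonglongrightarrow> L"
    using Cauchy_convergent_iff convergent_def by blast
  have "(\<lambda>n. \<phi> (xs n)) \<longlonglongrightarrow> \<phi> L" using bl L by (rule bounded_linear.tendsto)
  moreover have "(\<lambda>n. \<phi> (xs n)) = (\<lambda>n. 1)" using xsC by (auto simp: C_def)
  ultimately have "(\<lambda>n. 1) \<longlonglongrightarrow> \<phi> L" by simp
  then have phiL: "\<phi> L = 1" using LIMSEQ_unique[OF _ tendsto_const] by blast
  have "norm L \<le> d"
  proof (rule LIMSEQ_le)
    show "(\<lambda>n. norm (xs n)) \<longlonglongrightarrow> norm L" using L by (rule tendsto_norm)
    show "(\<lambda>n. d + 1 / (real n + 1)) \<longlonglongrightarrow> d" by real_asymp
    show "\<exists>N. \<forall>n\<ge>N. norm (xs n) \<le> d + 1 / (real n + 1)" using xsd less_imp_le by blast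
  qed
  then have Lmin: "norm L \<le> norm c" if "c \<in> C" for c using d_le[OF that] by simp
  have orth: "cinner L k = 0" if k: "\<phi> k = 0" for k
  proof -
    have gen: "0 \<le> (cmod t)\<^sup>2 * (norm k)\<^sup>2 + 2 * Re (cnj t * cinner L k)" for t
    proof -
      have "L + t *\<^sub>C k \<in> C" using phiL k by (simp add: C_def add sc)
      then have "norm L \<le> norm (L + t *\<^sub>C k)" by (rule Lmin)
      then have "(norm L)\<^sup>2 \<le> (norm (L + t *\<^sub>C k))\<^sup>2" by (simp add: power_mono)
      also have "\<dots> = (norm L)\<^sup>2 + (cmod t)\<^sup>2 * (norm k)\<^sup>2 + 2 * Re (cnj t * cinner L k)"
        by (simp add: norm_sq_expand norm_scaleC cinner_scaleC_right power_mult_distrib)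
      finally show ?thesis by simp
    qed
    have "\<forall>s. 0 \<le> (norm k)\<^sup>2 * s\<^sup>2 + (2 * Re (cinner L k)) * s"
    proof
      fix s :: real
      show "0 \<le> (norm k)\<^sup>2 * s\<^sup>2 + (2 * Re (cinner L k)) * s"
        using gen[of "complex_of_real s"] by (simp add: algebra_simps)
    qed
    then have re: "Re (cinner L k) = 0" using quad_nonneg_imp by fastforce
    have "\<forall>s. 0 \<le> (norm k)\<^sup>2 * s\<^sup>2 + (2 * Im (cinner L k)) * s"
    proof
      fix s :: real
      have "Re (cnj (\<i> * complex_of_real s) * cinner L k) = s * Im (cinner L k)"
        by simp
      then show "0 \<le> (norm k)\<^sup>2 * s\<^sup>2 + (2 * Im (cinner L k)) * s"
        using gen[of "\<i> * complex_of_real s"] by (simp add: algebra_simps norm_mult)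
    qed
    then have im: "Im (cinner L k) = 0" using quad_nonneg_imp by fastforce
    show ?thesis using re im by (simp add: complex_eq_iff)
  qed
  have L0: "L \<noteq> 0" using phiL phi0 by auto
  define v where "v = (1 / (norm L)\<^sup>2) *\<^sub>R L"
  have "\<phi> x = cinner x v" for x
  proof -
    have "\<phi> (x - \<phi> x *\<^sub>C L) = 0"
      using add[of "x - \<phi> x *\<^sub>C L" "\<phi> x *\<^sub>C L"] sc[of "\<phi> x" L] phiL by simp
    then have "cinner L (x - \<phi> x *\<^sub>C L) = 0" by (rule orth)
    then have "cinner (x - \<phi> x *\<^sub>C L) L = 0" by (subst cinner_commute) simp
    then have "cinner x L = \<phi> x * complex_of_real ((norm L)\<^sup>2)"
      by (simp add: cinner_diff_left cinner_scaleC_left cinner_self_norm)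
    then show ?thesis using L0
      by (simp add: v_def cinner_scaleR_right field_simps)
  qed
  then show ?thesis by blast
qed

lemma bilinear_Cauchy_product_sums:
  fixes a :: "nat \<Rightarrow> 'a::banach" and b :: "nat \<Rightarrow> 'b::banach"
    and prod :: "'a \<Rightarrow> 'b \<Rightarrow> 'c::banach"
  assumes bb: "bounded_bilinear prod"
    and a: "summable (\<lambda>k. norm (a k))"
    and b: "summable (\<lambda>k. norm (b k))"
  shows "(\<lambda>k. \<Sum>i\<le>k. prod (a i) (b (k - i))) sums (prod (\<Sum>k. a k) (\<Sum>k. b k))"
proof -
  interpret bb: bounded_bilinear prod by (rule bb)
  obtain K where K: "K \<ge> 0" "\<And>x y. norm (prod x y) \<le> norm x * norm y * K"
    using bb.nonneg_bounded by blast
  let ?S1 = "\<lambda>n::nat. {..<n} \<times> {..<n}"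
  let ?S2 = "\<lambda>n::nat. {(i,j). i + j < n}"
  have S1_mono: "\<And>m n. m \<le> n \<Longrightarrow> ?S1 m \<subseteq> ?S1 n" by auto
  have S2_le_S1: "\<And>n. ?S2 n \<subseteq> ?S1 n" by auto
  have S1_le_S2: "\<And>n. ?S1 (n div 2) \<subseteq> ?S2 n" by auto
  have finite_S1: "\<And>n. finite (?S1 n)" by simp
  with S2_le_S1 have finite_S2: "\<And>n. finite (?S2 n)" by (rule finite_subset)
  let ?g = "\<lambda>(i,j). prod (a i) (b j)"
  let ?f = "\<lambda>(i,j). norm (a i) * norm (b j)"
  have f_nonneg: "\<And>x. 0 \<le> ?f x" by auto
  then have norm_sum_f: "\<And>A. norm (sum ?f A) = sum ?f A"
    unfolding real_norm_def
    by (simp only: abs_of_nonneg sum_nonneg [rule_format])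
  have "(\<lambda>n. prod (\<Sum>k<n. a k) (\<Sum>k<n. b k)) \<longlonglongrightarrow> prod (\<Sum>k. a k) (\<Sum>k. b k)"
    by (intro bb.tendsto summable_LIMSEQ summable_norm_cancel [OF a] summable_norm_cancel [OF b])
  moreover have "prod (\<Sum>k<n. a k) (\<Sum>k<n. b k) = sum ?g (?S1 n)" for n
  proof -
    have "prod (\<Sum>k<n. a k) (\<Sum>k<n. b k) = (\<Sum>i<n. prod (a i) (\<Sum>k<n. b k))" by (rule bb.sum_left)
    also have "\<dots> = (\<Sum>i<n. \<Sum>j<n. prod (a i) (b j))" by (simp add: bb.sum_right)
    also have "\<dots> = sum ?g (?S1 n)" by (simp add: sum.cartesian_product)
    finally show ?thesis .
  qed
  ultimately have 1: "(\<lambda>n. sum ?g (?S1 n)) \<longlonglongrightarrow> prod (\<Sum>k. a k) (\<Sum>k. b k)"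
    by simp
  have "(\<lambda>n. (\<Sum>k<n. norm (a k)) * (\<Sum>k<n. norm (b k))) \<longlonglongrightarrow> (\<Sum>k. norm (a k)) * (\<Sum>k. norm (b k))"
    using a b by (intro tendsto_mult summable_LIMSEQ)
  then have "(\<lambda>n. sum ?f (?S1 n)) \<longlonglongrightarrow> (\<Sum>k. norm (a k)) * (\<Sum>k. norm (b k))"
    by (simp only: sum_product sum.Sigma [rule_format] finite_lessThan)
  then have "convergent (\<lambda>n. sum ?f (?S1 n))"
    by (rule convergentI)
  then have Cauchy: "Cauchy (\<lambda>n. sum ?f (?S1 n))"
    by (rule convergent_Cauchy)
  have Zf: "Zfun (\<lambda>n. sum ?f (?S1 n - ?S2 n)) sequentially"
  proof (rule ZfunI, simp only: eventually_sequentially norm_sum_f)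
    fix r :: real
    assume r: "0 < r"
    from CauchyD [OF Cauchy r] obtain N
      where "\<forall>m\<ge>N. \<forall>n\<ge>N. norm (sum ?f (?S1 m) - sum ?f (?S1 n)) < r" ..
    then have "\<And>m n. N \<le> n \<Longrightarrow> n \<le> m \<Longrightarrow> norm (sum ?f (?S1 m - ?S1 n)) < r"
      by (simp only: sum_diff finite_S1 S1_mono)
    then have N: "\<And>m n. N \<le> n \<Longrightarrow> n \<le> m \<Longrightarrow> sum ?f (?S1 m - ?S1 n) < r"
      by (simp only: norm_sum_f)
    show "\<exists>N. \<forall>n\<ge>N. sum ?f (?S1 n - ?S2 n) < r"
    proof (intro exI allI impI)
      fix n
      assume "2 * N \<le> n"
      then have n: "N \<le> n div 2" by simp
      have "sum ?f (?S1 n - ?S2 n) \<le> sum ?f (?S1 n - ?S1 (n div 2))"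
        by (intro sum_mono2 finite_Diff finite_S1 f_nonneg Diff_mono subset_refl S1_le_S2)
      also have "\<dots> < r"
        using n div_le_dividend by (rule N)
      finally show "sum ?f (?S1 n - ?S2 n) < r" .
    qed
  qed
  have "Zfun (\<lambda>n. sum ?g (?S1 n - ?S2 n)) sequentially"
  proof (rule Zfun_imp_Zfun[OF Zf, where K=K], rule always_eventually, rule allI)
    fix n
    have "norm (sum ?g (?S1 n - ?S2 n)) \<le> (\<Sum>p\<in>?S1 n - ?S2 n. norm (?g p))"
      by (rule norm_sum)
    also have "\<dots> \<le> (\<Sum>p\<in>?S1 n - ?S2 n. ?f p * K)"
      by (intro sum_mono) (auto simp: K(2))
    also have "\<dots> = sum ?f (?S1 n - ?S2 n) * K" by (simp add: sum_distrib_right)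
    also have "\<dots> = norm (sum ?f (?S1 n - ?S2 n)) * K" by (simp only: norm_sum_f)
    finally show "norm (sum ?g (?S1 n - ?S2 n)) \<le> norm (sum ?f (?S1 n - ?S2 n)) * K" .
  qed
  then have 2: "(\<lambda>n. sum ?g (?S1 n) - sum ?g (?S2 n)) \<longlonglongrightarrow> 0"
    unfolding tendsto_Zfun_iff diff_0_right
    by (simp only: sum_diff finite_S1 S2_le_S1)
  with 1 have "(\<lambda>n. sum ?g (?S2 n)) \<longlonglongrightarrow> prod (\<Sum>k. a k) (\<Sum>k. b k)"
    by (rule Lim_transform2)
  then show ?thesis
    by (simp only: sums_def sum.triangle_reindex)
qed

definition sc :: "nat \<Rightarrow> real" where "sc n = (-1)^n * ((1/2) gchoose n)"

lemma sc_0[simp]: "sc 0 = 1" by (simp add: sc_def)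

lemma sc_Suc: "sc (Suc n) = sc n * (real n - 1/2) / (real n + 1)"
proof -
  define g where "g = (1/2::real) gchoose n"
  define g1 where "g1 = (1/2::real) gchoose (Suc n)"
  have h: "(1/2) * g = real n * g + (real n + 1) * g1"
    using gbinomial_mult_1[of "1/2::real" n] by (simp add: g_def g1_def add.commute)
  have "g1 = g * (1/2 - real n) / (real n + 1)"
    using h by (simp add: field_simps)
  then have "(-1)^(Suc n) * g1 = ((-1)^n * g) * (real n - 1/2) / (real n + 1)"
    by (simp add: algebra_simps minus_divide_left[symmetric])
  then show ?thesis unfolding sc_def g_def[symmetric] g1_def[symmetric] .
qed

lemma sc_nonpos: "n \<ge> 1 \<Longrightarrow> sc n \<le> 0"
proof (induction n rule: nat_induct_at_least)
  case base then show ?case by (simp add: sc_def)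
next
  case (Suc n)
  then show ?case by (simp add: sc_Suc divide_nonpos_pos mult_nonpos_nonneg)
qed

lemma sc_partial: "(\<Sum>k\<le>N. sc k) = -2 * (real N + 1) * sc (Suc N)"
proof (induction N)
  case 0 then show ?case by (simp add: sc_Suc)
next
  case (Suc N)
  have "(\<Sum>k\<le>Suc N. sc k) = -2 * (real N + 1) * sc (Suc N) + sc (Suc N)"
    using Suc by simp
  also have "\<dots> = -2 * (real (Suc N) + 1) * sc (Suc (Suc N))"
    unfolding sc_Suc[of "Suc N"] by (simp add: field_simps)
  finally show ?case .
qed

lemma sc_partial_nonneg: "0 \<le> (\<Sum>k\<le>N. sc k)"
  unfolding sc_partial using sc_nonpos[of "Suc N"] by (simp add: mult_nonpos_nonpos)

lemma sc_abs_partial: "(\<Sum>k\<le>N. \<bar>sc k\<bar>) = 2 - (\<Sum>k\<le>N. sc k)"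
proof (induction N)
  case 0 then show ?case by simp
next
  case (Suc N)
  then show ?case using sc_nonpos[of "Suc N"] by simp
qed

lemma sc_abs_partial_le: "(\<Sum>k\<le>N. \<bar>sc k\<bar>) \<le> 2"
  using sc_abs_partial[of N] sc_partial_nonneg[of N] by simp

lemma sc_abs_summable: "summable (\<lambda>n. \<bar>sc n\<bar>)"
proof (rule summableI_nonneg_bounded[where x=2])
  fix n
  show "(\<Sum>k<n. \<bar>sc k\<bar>) \<le> 2"
  proof (cases n)
    case 0 then show ?thesis by simp
  next
    case (Suc m)
    then have "{..<n} = {..m}" by auto
    then show ?thesis using sc_abs_partial_le[of m] by simp
  qed
qed simp

lemma sc_summable: "summable sc"
  using sc_abs_summable summable_rabs_cancel by blast

lemma sc_suminf_nonneg: "0 \<le> suminf sc"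
proof -
  have "(\<lambda>n. \<Sum>k<n. sc k) \<longlonglongrightarrow> suminf sc" using sc_summable by (rule summable_LIMSEQ)
  moreover have "0 \<le> (\<Sum>k<n. sc k)" for n
  proof (cases n)
    case 0 then show ?thesis by simp
  next
    case (Suc m)
    then have "{..<n} = {..m}" by auto
    then show ?thesis using sc_partial_nonneg[of m] by simp
  qed
  ultimately show ?thesis by (simp add: LIMSEQ_le_const)
qed

lemma sc_cauchy: "(\<Sum>i\<le>k. sc i * sc (k - i)) = (if k = 0 then 1 else if k = 1 then -1 else 0)"
proof -
  have "(\<Sum>i\<le>k. sc i * sc (k - i)) = (\<Sum>i\<le>k. (-1)^k * (((1/2::real) gchoose i) * ((1/2) gchoose (k - i))))"
  proof (rule sum.cong)
    fix i assume "i \<in> {..k}"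
    then have "(-1::real)^i * (-1)^(k-i) = (-1)^k" by (simp add: power_add[symmetric])
    then show "sc i * sc (k - i) = (-1)^k * (((1/2::real) gchoose i) * ((1/2) gchoose (k - i)))"
      unfolding sc_def by (metis (no_types, lifting) mult.assoc mult.left_commute)
  qed simp
  also have "\<dots> = (-1)^k * (\<Sum>i=0..k. ((1/2::real) gchoose i) * ((1/2) gchoose (k - i)))"
    by (simp add: sum_distrib_left atLeast0AtMost)
  also have "\<dots> = (-1)^k * ((1::real) gchoose k)"
    using gbinomial_Vandermonde[of "1/2::real" "1/2" k] by simp
  also have "(1::real) gchoose k = of_nat (1 choose k)"
    using binomial_gbinomial[of 1 k, where 'a=real] by simp
  also have "(-1)^k * real (1 choose k) = (if k = 0 then 1 else if k = 1 then -1 else 0)"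
    by (cases k) (auto simp: binomial_eq_0)
  finally show ?thesis .
qed

instance chilbert \<subseteq> banach ..

definition clin :: "('a::complex_vector \<Rightarrow> 'a) \<Rightarrow> bool" where
  "clin A \<longleftrightarrow> (\<forall>x y. A (x + y) = A x + A y) \<and> (\<forall>c x. A (c *\<^sub>C x) = c *\<^sub>C A x)"

lemma clin_add: "clin A \<Longrightarrow> A (x + y) = A x + A y" by (simp add: clin_def)
lemma clin_scaleC: "clin A \<Longrightarrow> A (c *\<^sub>C x) = c *\<^sub>C A x" by (simp add: clin_def)
lemma clin_zero: "clin A \<Longrightarrow> A 0 = 0"
  using clin_add[of A 0 0] by simp
lemma clin_minus: "clin A \<Longrightarrow> A (- x) = - A x"
  using clin_add[of A x "-x"] clin_zero[of A] by (simp add: eq_neg_iff_add_eq_0 add.commute)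
lemma clin_diff: "clin A \<Longrightarrow> A (x - y) = A x - A y"
  using clin_add[of A x "-y"] clin_minus[of A y] by simp
lemma clin_scaleR: "clin A \<Longrightarrow> A (r *\<^sub>R x) = r *\<^sub>R A x"
  by (simp add: scaleR_scaleC clin_scaleC)
lemma clin_sum: "clin A \<Longrightarrow> A (\<Sum>i\<in>I. f i) = (\<Sum>i\<in>I. A (f i))"
  by (induction I rule: infinite_finite_induct) (auto simp: clin_zero clin_add)
lemma clin_comp: "clin A \<Longrightarrow> clin B \<Longrightarrow> clin (\<lambda>x. A (B x))"
  by (simp add: clin_def)
lemma clin_id: "clin (\<lambda>x. x)" by (simp add: clin_def)
lemma clin_iter: "clin A \<Longrightarrow> clin (A ^^ n)"
  by (induction n) (auto simp: clin_def)
lemma clin_bounded_linear: "clin A \<Longrightarrow> (\<And>x. norm (A x) \<le> K * norm x) \<Longrightarrow> bounded_linear A"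
  by (rule bounded_linear_intro[where K=K]) (auto simp: clin_add clin_scaleR mult.commute)

lemma bop_UNIV: "bop_on UNIV T \<longleftrightarrow> clin T \<and> (\<exists>K. \<forall>x. norm (T x) \<le> K * norm x)"
  by (simp add: bop_on_def clin_def)

lemma cinner_ext_right: "(\<And>x. cinner x u = cinner x v) \<Longrightarrow> u = v"
  by (metis cinner_diff_right cinner_eq_zero_iff eq_iff_diff_eq_0)
lemma cinner_ext_left: "(\<And>y. cinner u y = cinner v y) \<Longrightarrow> u = v"
  by (metis cinner_diff_left cinner_eq_zero_iff eq_iff_diff_eq_0)

lemma adjoint_exists:
  fixes T :: "'a::chilbert \<Rightarrow> 'a"
  assumes "clin T" "\<And>x. norm (T x) \<le> K * norm x"
  shows "\<exists>B. \<forall>x y. cinner (T x) y = cinner x (B y)"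
proof -
  have "\<exists>v. \<forall>x. cinner (T x) y = cinner x v" for y
  proof (rule riesz_c[where K="K * norm y"])
    show "cinner (T (x + z)) y = cinner (T x) y + cinner (T z) y" for x z
      by (simp add: assms(1) clin_add cinner_add_left)
    show "cinner (T (c *\<^sub>C x)) y = c * cinner (T x) y" for c x
      by (simp add: assms(1) clin_scaleC cinner_scaleC_left)
    show "cmod (cinner (T x) y) \<le> K * norm y * norm x" for x
    proof -
      have "cmod (cinner (T x) y) \<le> norm (T x) * norm y" by (rule cauchy_schwarz_c)
      also have "\<dots> \<le> K * norm x * norm y" using assms(2)[of x] by (simp add: mult_right_mono)
      finally show ?thesis by (simp add: algebra_simps)
    qed
  qed
  then show ?thesis by metis
qed

lemma adjoint_on_UNIV:
  assumes "bop_on UNIV (T :: 'a::chilbert \<Rightarrow> 'a)"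
  shows "cinner (T x) y = cinner x (adjoint_on UNIV T y)"
proof -
  obtain K where "clin T" "\<And>x. norm (T x) \<le> K * norm x" using assms bop_UNIV by metis
  then obtain B where B: "\<forall>x y. cinner (T x) y = cinner x (B y)" using adjoint_exists by metis
  have "\<exists>B. (\<forall>y\<in>UNIV. B y \<in> UNIV) \<and> (\<forall>x\<in>UNIV. \<forall>y\<in>UNIV. cinner (T x) y = cinner x (B y))"
    using B by blast
  from someI_ex[OF this] show ?thesis unfolding adjoint_on_def by blast
qed

lemma adj_clin: "(\<And>x y. cinner (A x) y = cinner x (B y)) \<Longrightarrow> clin B"
  unfolding clin_def
  by (metis cinner_add_right cinner_ext_right cinner_scaleC_right)

lemma adj_swap: "(\<And>x y. cinner (A x) y = cinner x (B y)) \<Longrightarrow> cinner (B y) x = cinner y (A x)"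
  by (metis cinner_commute)

lemma adj_bound:
  fixes A B :: "'a::complex_inner \<Rightarrow> 'a"
  assumes adj: "\<And>x y. cinner (A x) y = cinner x (B y)" and bd: "\<And>x. norm (A x) \<le> K * norm x"
  shows "norm (B y) \<le> K * norm y"
proof (cases "B y = 0")
  case True
  have "0 \<le> K * norm y"
  proof (cases "y = 0")
    case False
    have "0 \<le> norm (A y)" by simp
    also have "\<dots> \<le> K * norm y" by (rule bd)
    finally show ?thesis .
  qed simp
  then show ?thesis using True by simp
next
  case False
  have "(norm (B y))\<^sup>2 = Re (cinner (B y) (B y))" by (simp add: Re_cinner_self_norm)
  also have "\<dots> = Re (cinner (A (B y)) y)" by (simp add: adj)
  also have "\<dots> \<le> cmod (cinner (A (B y)) y)" by (rule complex_Re_le_cmod)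
  also have "\<dots> \<le> norm (A (B y)) * norm y" by (rule cauchy_schwarz_c)
  also have "\<dots> \<le> K * norm (B y) * norm y" using bd[of "B y"] by (simp add: mult_right_mono)
  finally have "norm (B y) * norm (B y) \<le> norm (B y) * (K * norm y)"
    by (simp add: power2_eq_square algebra_simps)
  then show ?thesis using False by simp
qed

definition herm :: "('a::complex_inner \<Rightarrow> 'a) \<Rightarrow> bool" where
  "herm A \<longleftrightarrow> (\<forall>x y. cinner (A x) y = cinner x (A y))"

lemma polarization_herm:
  fixes A :: "'a::complex_inner \<Rightarrow> 'a"
  assumes lin: "clin A" and re: "\<And>x. Im (cinner (A x) x) = 0"
  shows "herm A"
  unfolding herm_def
proof (intro allI)
  fix x y
  define a where "a = cinner (A x) y"
  define b where "b = cinner (A y) x"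
  have "cinner (A (x + y)) (x + y) = cinner (A x) x + cinner (A y) y + a + b"
    by (simp add: a_def b_def lin clin_add cinner_add_left cinner_add_right)
  then have 1: "Im a + Im b = 0" using re[of "x+y"] re[of x] re[of y] by simp
  have "cinner (A (x + \<i> *\<^sub>C y)) (x + \<i> *\<^sub>C y) = cinner (A x) x + cinner (A y) y - \<i> * a + \<i> * b"
    by (simp add: a_def b_def lin clin_add clin_scaleC cinner_add_left cinner_add_right
        cinner_scaleC_left cinner_scaleC_right algebra_simps)
  then have 2: "- Re a + Re b = 0" using re[of "x + \<i> *\<^sub>C y"] re[of x] re[of y] by simp
  have "a = cnj b" using 1 2 by (simp add: complex_eq_iff)
  then show "cinner (A x) y = cinner x (A y)"
    by (simp add: a_def b_def cinner_commute[of x])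
qed

lemma iter_bound:
  fixes X :: "'a::real_normed_vector \<Rightarrow> 'a"
  assumes X: "\<And>v. norm (X v) \<le> norm v" shows "norm ((X ^^ n) v) \<le> norm v"
proof (induction n)
  case (Suc n)
  have "norm (X ((X ^^ n) v)) \<le> norm ((X ^^ n) v)" by (rule X)
  then show ?case using Suc by simp
qed simp

lemma herm_iter: "herm X \<Longrightarrow> herm (X ^^ n)"
proof (induction n)
  case 0 then show ?case by (simp add: herm_def)
next
  case (Suc n)
  show ?case unfolding herm_def
  proof (intro allI)
    fix x y
    have "cinner ((X ^^ Suc n) x) y = cinner (X ((X ^^ n) x)) y" by simp
    also have "\<dots> = cinner ((X ^^ n) x) (X y)" using Suc.prems by (simp add: herm_def)
    also have "\<dots> = cinner x ((X ^^ n) (X y))" using Suc.IH Suc.prems by (simp add: herm_def)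
    also have "(X ^^ n) (X y) = (X ^^ Suc n) y" by (simp add: funpow_Suc_right del: funpow.simps)
    finally show "cinner ((X ^^ Suc n) x) y = cinner x ((X ^^ Suc n) y)" .
  qed
qed

lemma sqrt_exists:
  fixes X :: "'a::chilbert \<Rightarrow> 'a"
  assumes lin: "clin X" and contr: "\<And>v. norm (X v) \<le> norm v" and hX: "herm X"
  shows "\<exists>S. clin S \<and> (\<exists>K. \<forall>x. norm (S x) \<le> K * norm x)
     \<and> (\<forall>x. Im (cinner (S x) x) = 0 \<and> 0 \<le> Re (cinner (S x) x))
     \<and> (\<forall>x. S (S x) = x - X x)"
proof -
  define Xn where "Xn n = X ^^ n" for n
  have Xn_lin: "clin (Xn n)" for n unfolding Xn_def by (rule clin_iter[OF lin])
  have Xn_bd: "norm (Xn n v) \<le> norm v" for n v unfolding Xn_def by (rule iter_bound[OF contr])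
  have Xn_bl: "bounded_linear (Xn n)" for n
    by (rule clin_bounded_linear[OF Xn_lin, where K=1]) (simp add: Xn_bd)
  have Xn_herm: "herm (Xn n)" for n unfolding Xn_def by (rule herm_iter[OF hX])
  have Xn_add: "Xn i (Xn j v) = Xn (i + j) v" for i j v
    unfolding Xn_def by (simp add: funpow_add)
  define Bn where "Bn n = Blinfun (\<lambda>v. sc n *\<^sub>R Xn n v)" for n
  have Bn_bl: "bounded_linear (\<lambda>v. sc n *\<^sub>R Xn n v)" for n
    using bounded_linear_scaleR_right[THEN bounded_linear_compose, OF Xn_bl] by simp
  have Bn_apply: "blinfun_apply (Bn n) v = sc n *\<^sub>R Xn n v" for n v
    unfolding Bn_def using Bn_bl[of n] by (simp add: bounded_linear_Blinfun_apply)
  have Bn_norm: "norm (Bn n) \<le> \<bar>sc n\<bar>" for n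
    by (rule norm_blinfun_bound) (auto simp: Bn_apply Xn_bd mult_left_mono)
  have sumBn: "summable (\<lambda>n. norm (Bn n))"
    by (rule summable_comparison_test[OF _ sc_abs_summable]) (auto simp: Bn_norm)
  define SB where "SB = (\<Sum>n. Bn n)"
  define S where "S x = blinfun_apply SB x" for x
  have ev: "bounded_linear (\<lambda>A. blinfun_apply A v)" for v :: 'a
    by (rule bounded_bilinear.bounded_linear_left[OF bounded_bilinear_blinfun_apply])
  have summ_v: "summable (\<lambda>n. sc n *\<^sub>R Xn n v)" for v
    using bounded_linear.summable[OF ev summable_norm_cancel[OF sumBn]] by (simp add: Bn_apply)
  have S_eq: "S v = (\<Sum>n. sc n *\<^sub>R Xn n v)" for v
    unfolding S_def SB_def using bounded_linear.suminf[OF ev summable_norm_cancel[OF sumBn]]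
    by (simp add: Bn_apply)
  have S_bd: "norm (S x) \<le> norm SB * norm x" for x unfolding S_def by (rule norm_blinfun)
  have S_bl: "bounded_linear S" unfolding S_def by (rule blinfun.bounded_linear_right)
  have S_lin: "clin S"
    unfolding clin_def
  proof (intro conjI allI)
    show "S (x + y) = S x + S y" for x y using S_bl by (simp add: linear_simps)
    show "S (c *\<^sub>C x) = c *\<^sub>C S x" for c x
    proof -
      have bc: "bounded_linear (\<lambda>v::'a. c *\<^sub>C v)"
        by (rule bounded_linear_intro[where K="cmod c"])
          (auto simp: complex_vector.scale_right_distrib norm_scaleC scaleR_scaleC complex_vector.scale_scale mult.commute)
      have "c *\<^sub>C S x = (\<Sum>n. c *\<^sub>C (sc n *\<^sub>R Xn n x))"
        unfolding S_eq using bounded_linear.suminf[OF bc summ_v] by simp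
      also have "\<dots> = (\<Sum>n. sc n *\<^sub>R Xn n (c *\<^sub>C x))"
        by (simp add: Xn_lin clin_scaleC scaleR_scaleC complex_vector.scale_scale mult.commute)
      finally show ?thesis by (simp add: S_eq)
    qed
  qed
  have S_sq: "S (S x) = x - X x" for x
  proof -
    define b where "b j = sc j *\<^sub>R Xn j x" for j
    have sumb: "summable (\<lambda>j. norm (b j))"
      by (rule summable_comparison_test[OF _ summable_mult2[OF sc_abs_summable, of "norm x"]])
        (auto simp: b_def Xn_bd mult_left_mono)
    have "(\<lambda>k. \<Sum>i\<le>k. blinfun_apply (Bn i) (b (k - i))) sums (blinfun_apply (\<Sum>k. Bn k) (\<Sum>k. b k))"
      by (rule bilinear_Cauchy_product_sums[OF bounded_bilinear_blinfun_apply sumBn sumb])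
    moreover have "(\<Sum>k. b k) = S x" by (simp add: S_eq b_def)
    moreover have "(\<Sum>i\<le>k. blinfun_apply (Bn i) (b (k - i))) =
        (if k = 0 then x else 0) + (if k = 1 then - X x else 0)" for k
    proof -
      have "(\<Sum>i\<le>k. blinfun_apply (Bn i) (b (k - i))) = (\<Sum>i\<le>k. (sc i * sc (k - i)) *\<^sub>R Xn k x)"
      proof (rule sum.cong)
        fix i assume "i \<in> {..k}"
        then have "i + (k - i) = k" by simp
        then show "blinfun_apply (Bn i) (b (k - i)) = (sc i * sc (k - i)) *\<^sub>R Xn k x"
          by (simp add: Bn_apply b_def Xn_lin clin_scaleR Xn_add)
      qed simp
      also have "\<dots> = (\<Sum>i\<le>k. sc i * sc (k - i)) *\<^sub>R Xn k x"
        by (simp add: scaleR_sum_left)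
      also have "\<dots> = (if k = 0 then x else 0) + (if k = 1 then - X x else 0)"
        by (simp add: sc_cauchy Xn_def)
      finally show ?thesis .
    qed
    ultimately have "(\<lambda>k. (if k = 0 then x else 0) + (if k = 1 then - X x else 0)) sums S (S x)"
      by (simp add: S_def SB_def)
    moreover have "(\<lambda>k. (if k = 0 then x else 0) + (if k = 1 then - X x else 0)) sums (x + - X x)"
      by (rule sums_add) (use sums_single[of 0 "\<lambda>_. x"] sums_single[of 1 "\<lambda>_. - X x"] in auto)
    ultimately show ?thesis using sums_unique2 by fastforce
  qed
  have S_pos: "Im (cinner (S x) x) = 0 \<and> 0 \<le> Re (cinner (S x) x)" for x
  proof -
    have ci: "bounded_linear (\<lambda>v. cinner v x)" by (rule bounded_linear_cinner_left)
    have cS: "cinner (S x) x = (\<Sum>n. complex_of_real (sc n) * cinner (Xn n x) x)"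
      unfolding S_eq using bounded_linear.suminf[OF ci summ_v] by (simp add: cinner_scaleR_left)
    have summ_c: "summable (\<lambda>n. complex_of_real (sc n) * cinner (Xn n x) x)"
      using bounded_linear.summable[OF ci summ_v] by (simp add: cinner_scaleR_left)
    have realn: "Im (cinner (Xn n x) x) = 0" for n
    proof -
      have "cinner (Xn n x) x = cinner x (Xn n x)" using Xn_herm[of n] by (simp add: herm_def)
      also have "\<dots> = cnj (cinner (Xn n x) x)" by (rule cinner_commute)
      finally show ?thesis by (metis cnj.simps(2) neg_equal_zero)
    qed
    have "Im (cinner (S x) x) = (\<Sum>n. Im (complex_of_real (sc n) * cinner (Xn n x) x))"
      unfolding cS using bounded_linear.suminf[OF bounded_linear_Im summ_c] by simp
    also have "\<dots> = 0" by (simp add: realn)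
    finally have im: "Im (cinner (S x) x) = 0" .
    have reS: "Re (cinner (S x) x) = (\<Sum>n. sc n * Re (cinner (Xn n x) x))"
      unfolding cS using bounded_linear.suminf[OF bounded_linear_Re summ_c] by (simp add: realn)
    have summ_r: "summable (\<lambda>n. sc n * Re (cinner (Xn n x) x))"
      using summable_Re[OF summ_c] by (simp add: realn)
    have le: "sc n * (norm x)\<^sup>2 \<le> sc n * Re (cinner (Xn n x) x)" for n
    proof (cases "n = 0")
      case True then show ?thesis by (simp add: Xn_def Re_cinner_self_norm)
    next
      case False
      then have "sc n \<le> 0" using sc_nonpos[of n] by simp
      moreover have "Re (cinner (Xn n x) x) \<le> (norm x)\<^sup>2"
      proof -
        have "Re (cinner (Xn n x) x) \<le> cmod (cinner (Xn n x) x)" by (rule complex_Re_le_cmod)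
        also have "\<dots> \<le> norm (Xn n x) * norm x" by (rule cauchy_schwarz_c)
        also have "\<dots> \<le> norm x * norm x" by (simp add: Xn_bd mult_right_mono)
        finally show ?thesis by (simp add: power2_eq_square)
      qed
      ultimately show ?thesis by (simp add: mult_left_mono_neg)
    qed
    have "0 \<le> suminf sc * (norm x)\<^sup>2" by (simp add: sc_suminf_nonneg)
    also have "\<dots> = (\<Sum>n. sc n * (norm x)\<^sup>2)" using sc_summable by (simp add: suminf_mult2)
    also have "\<dots> \<le> (\<Sum>n. sc n * Re (cinner (Xn n x) x))"
      by (rule suminf_le[OF le summable_mult2[OF sc_summable] summ_r])
    finally show ?thesis using im reS by simp
  qed
  show ?thesis
    using S_lin S_bd S_pos S_sq by blast
qed

definition oproj :: "'a::complex_inner set \<Rightarrow> 'a \<Rightarrow> 'a" where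
  "oproj E x = (\<Sum>e\<in>E. cinner x e *\<^sub>C e)"

lemma corth_one: "corthonormal E \<Longrightarrow> e \<in> E \<Longrightarrow> cinner e e = 1"
  by (simp add: corthonormal_def)
lemma corth_zero: "corthonormal E \<Longrightarrow> e \<in> E \<Longrightarrow> f \<in> E \<Longrightarrow> e \<noteq> f \<Longrightarrow> cinner e f = 0"
  by (simp add: corthonormal_def)

lemma sum_corth: "finite E \<Longrightarrow> corthonormal E \<Longrightarrow> f \<in> E \<Longrightarrow> (\<Sum>e\<in>E. a e * cinner e f) = a f"
proof -
  assume E: "finite E" "corthonormal E" "f \<in> E"
  have "(\<Sum>e\<in>E. a e * cinner e f) = (\<Sum>e\<in>E. if e = f then a f else 0)"
    by (rule sum.cong) (auto simp: E corth_one[OF E(2)] corth_zero[OF E(2)])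
  also have "\<dots> = a f" using E by simp
  finally show ?thesis .
qed

lemma cinner_oproj_left: "cinner (oproj E x) f = (\<Sum>e\<in>E. cinner x e * cinner e f)"
  by (simp add: oproj_def cinner_sum_left cinner_scaleC_left)

lemma oproj_orth: "finite E \<Longrightarrow> corthonormal E \<Longrightarrow> f \<in> E \<Longrightarrow> cinner (x - oproj E x) f = 0"
  by (simp add: cinner_diff_left cinner_oproj_left sum_corth)

lemma span_expand:
  assumes E: "finite E" "corthonormal E" and v: "v \<in> cspan E"
  shows "oproj E v = v"
proof -
  obtain u where u: "v = (\<Sum>e\<in>E. u e *\<^sub>C e)"
    using v complex_vector.span_finite[OF E(1)] by auto
  have "cinner v f = u f" if "f \<in> E" for f
    unfolding u by (simp add: cinner_sum_left cinner_scaleC_left sum_corth E that)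
  then show ?thesis unfolding oproj_def u[symmetric] by (simp add: u)
qed

lemma orth_span:
  assumes E: "finite E" "corthonormal E" and h: "\<And>f. f \<in> E \<Longrightarrow> cinner h f = 0" and v: "v \<in> cspan E"
  shows "cinner h v = 0"
proof -
  have "cinner h v = cinner h (oproj E v)" using span_expand[OF E v] by simp
  also have "\<dots> = 0" by (simp add: oproj_def cinner_sum_right cinner_scaleC_right h)
  finally show ?thesis .
qed

lemma oproj_in_span: "oproj E x \<in> cspan E"
  unfolding oproj_def by (intro complex_vector.span_sum complex_vector.span_scale complex_vector.span_base)

lemma gram_schmidt:
  fixes S :: "'a::chilbert set"
  assumes "finite S"
  shows "\<exists>E. finite E \<and> corthonormal E \<and> cspan E = cspan S"
  using assms
proof (induction S rule: finite_induct)
  case empty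
  then show ?case by (intro exI[of _ "{}"]) (simp add: corthonormal_def)
next
  case (insert x S)
  then obtain E where E: "finite E" "corthonormal E" "cspan E = cspan S" by blast
  define y where "y = x - oproj E x"
  show ?case
  proof (cases "y = 0")
    case True
    then have "x \<in> cspan S" using oproj_in_span[of E x] E(3) by (simp add: y_def)
    then have "cspan (insert x S) = cspan S" by (rule complex_vector.span_redundant)
    then show ?thesis using E by auto
  next
    case False
    define e' where "e' = complex_of_real (1 / norm y) *\<^sub>C y"
    have ny: "norm y > 0" using False by simp
    have "norm e' = 1" using ny by (simp add: e'_def norm_scaleC norm_divide)
    then have e'e': "cinner e' e' = 1" by (simp add: cinner_self_norm)
    have e'f: "cinner e' f = 0" if "f \<in> E" for f
      using oproj_orth[OF E(1,2) that, of x] by (simp add: e'_def y_def cinner_scaleC_left)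
    have fe': "cinner f e' = 0" if "f \<in> E" for f
      using e'f[OF that] by (subst cinner_commute) simp
    have e'_notin: "e' \<notin> E" using e'e' e'f by force
    have orth: "corthonormal (insert e' E)"
      using E(2) e'e' e'f fe' unfolding corthonormal_def by auto
    have sp: "cspan (insert e' E) = cspan (insert x S)"
    proof (rule complex_vector.span_eq[THEN iffD2], intro conjI subsetI)
      fix v assume "v \<in> insert e' E"
      then show "v \<in> cspan (insert x S)"
      proof
        assume v: "v = e'"
        have "x \<in> cspan (insert x S)" by (simp add: complex_vector.span_base)
        moreover have "oproj E x \<in> cspan (insert x S)"
          using oproj_in_span[of E x] E(3) complex_vector.span_mono[of S "insert x S"] by auto
        ultimately have "y \<in> cspan (insert x S)" unfolding y_def by (rule complex_vector.span_diff)
        then show ?thesis unfolding v e'_def by (rule complex_vector.span_scale)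
      next
        assume "v \<in> E"
        then have "v \<in> cspan S" using E(3) complex_vector.span_base by blast
        then show ?thesis using complex_vector.span_mono[of S "insert x S"] by auto
      qed
    next
      fix v assume "v \<in> insert x S"
      then show "v \<in> cspan (insert e' E)"
      proof
        assume v: "v = x"
        have "x = complex_of_real (norm y) *\<^sub>C e' + oproj E x"
          using ny by (simp add: e'_def y_def complex_vector.scale_scale)
        moreover have "complex_of_real (norm y) *\<^sub>C e' \<in> cspan (insert e' E)"
          by (intro complex_vector.span_scale complex_vector.span_base) simp
        moreover have "oproj E x \<in> cspan (insert e' E)"
          using oproj_in_span[of E x] complex_vector.span_mono[of E "insert e' E"] by auto
        ultimately show ?thesis unfolding v by (metis complex_vector.span_add)
      next
        assume "v \<in> S"
        then have "v \<in> cspan E" using E(3) complex_vector.span_base by blast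
        then show ?thesis using complex_vector.span_mono[of E "insert e' E"] by auto
      qed
    qed
    show ?thesis using E(1) orth sp by (intro exI[of _ "insert e' E"]) auto
  qed
qed

definition lin_on :: "'a::complex_vector set \<Rightarrow> ('a \<Rightarrow> 'a) \<Rightarrow> bool" where
  "lin_on M A \<longleftrightarrow> (\<forall>x\<in>M. \<forall>y\<in>M. A (x + y) = A x + A y) \<and> (\<forall>c. \<forall>x\<in>M. A (c *\<^sub>C x) = c *\<^sub>C A x)"

definition herm_on :: "'a::complex_inner set \<Rightarrow> ('a \<Rightarrow> 'a) \<Rightarrow> bool" where
  "herm_on M A \<longleftrightarrow> (\<forall>x\<in>M. \<forall>y\<in>M. cinner (A x) y = cinner x (A y))"

lemma cnj_cinner: "cnj (cinner x y) = cinner y x"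
  by (metis cinner_commute)

lemma lin_on_sum:
  assumes sub: "complex_vector.subspace M" and lin: "lin_on M A" and fin: "finite E" and EM: "E \<subseteq> M"
  shows "A (\<Sum>e\<in>E. c e *\<^sub>C e) = (\<Sum>e\<in>E. c e *\<^sub>C A e)"
  using fin EM
proof (induction E rule: finite_induct)
  case empty
  have "A (0 + 0) = A 0 + A 0" using lin complex_vector.subspace_0[OF sub] unfolding lin_on_def by blast
  then show ?case by simp
next
  case (insert x F)
  have xM: "x \<in> M" using insert by simp
  have sM: "(\<Sum>e\<in>F. c e *\<^sub>C e) \<in> M"
    using insert sub by (intro complex_vector.subspace_sum complex_vector.subspace_scale) auto
  have cxM: "c x *\<^sub>C x \<in> M" using sub xM by (rule complex_vector.subspace_scale)
  have "A (\<Sum>e\<in>insert x F. c e *\<^sub>C e) = A (c x *\<^sub>C x + (\<Sum>e\<in>F. c e *\<^sub>C e))"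
    using insert by simp
  also have "\<dots> = A (c x *\<^sub>C x) + A (\<Sum>e\<in>F. c e *\<^sub>C e)" using lin cxM sM by (simp add: lin_on_def)
  also have "\<dots> = c x *\<^sub>C A x + (\<Sum>e\<in>F. c e *\<^sub>C A e)" using lin xM insert by (simp add: lin_on_def)
  finally show ?case using insert by simp
qed

lemma trace_sum_eq:
  fixes A :: "'a::chilbert \<Rightarrow> 'a"
  assumes sub: "complex_vector.subspace M" and maps: "\<And>x. x \<in> M \<Longrightarrow> A x \<in> M"
    and lin: "lin_on M A" and h: "herm_on M A"
    and E1: "finite E1" "E1 \<subseteq> M" "corthonormal E1" "A ` M \<subseteq> cspan E1"
    and E2: "finite E2" "E2 \<subseteq> M" "corthonormal E2" "A ` M \<subseteq> cspan E2"
  shows "(\<Sum>e\<in>E1. cinner (A e) e) = (\<Sum>f\<in>E2. cinner (A f) f)"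
proof -
  have span1: "cspan E1 \<subseteq> M" using E1(2) sub by (rule complex_vector.span_minimal)
  have key: "A f = (\<Sum>e\<in>E1. cinner f e *\<^sub>C A e)" if fM: "f \<in> M" for f
  proof -
    define p where "p = oproj E1 f"
    have pM: "p \<in> M" using oproj_in_span[of E1 f] span1 by (auto simp: p_def)
    define hh where "hh = f - p"
    have hM: "hh \<in> M" using fM pM sub by (simp add: hh_def complex_vector.subspace_diff)
    have hk: "cinner (A hh) k = 0" if kM: "k \<in> M" for k
    proof -
      have "cinner (A hh) k = cinner hh (A k)" using h hM kM by (simp add: herm_on_def)
      also have "\<dots> = 0"
        by (rule orth_span[OF E1(1,3)]) (use oproj_orth[OF E1(1,3)] E1(4) kM in \<open>auto simp: hh_def p_def\<close>)
      finally show ?thesis .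
    qed
    have Ah: "A hh = 0" using hk[OF maps[OF hM]] by (simp add: cinner_eq_zero_iff)
    have "A f = A (hh + p)" by (simp add: hh_def)
    also have "\<dots> = A hh + A p" using lin hM pM by (simp add: lin_on_def)
    also have "\<dots> = (\<Sum>e\<in>E1. cinner f e *\<^sub>C A e)"
      using Ah lin_on_sum[OF sub lin E1(1,2)] by (simp add: p_def oproj_def)
    finally show ?thesis .
  qed
  have "(\<Sum>f\<in>E2. cinner (A f) f) = (\<Sum>f\<in>E2. \<Sum>e\<in>E1. cinner f e * cinner (A e) f)"
    using E2(2) by (intro sum.cong) (auto simp: key cinner_sum_left cinner_scaleC_left)
  also have "\<dots> = (\<Sum>e\<in>E1. \<Sum>f\<in>E2. cinner f e * cinner (A e) f)" by (rule sum.swap)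
  also have "\<dots> = (\<Sum>e\<in>E1. cinner (A e) (oproj E2 e))"
    by (intro sum.cong) (auto simp: oproj_def cinner_sum_right cinner_scaleC_right cnj_cinner mult.commute)
  also have "\<dots> = (\<Sum>e\<in>E1. cinner (A e) e)"
  proof (intro sum.cong refl)
    fix e assume e: "e \<in> E1"
    have "cinner (e - oproj E2 e) (A e) = 0"
      by (rule orth_span[OF E2(1,3)]) (use oproj_orth[OF E2(1,3)] E2(4) E1(2) e in blast)+
    then have "cinner (A e) (e - oproj E2 e) = 0" by (subst cinner_commute) simp
    then show "cinner (A e) (oproj E2 e) = cinner (A e) e" by (simp add: cinner_diff_right)
  qed
  finally show ?thesis by simp
qed

lemma trace_on_eq:
  fixes A :: "'a::chilbert \<Rightarrow> 'a"
  assumes sub: "complex_vector.subspace M" and maps: "\<And>x. x \<in> M \<Longrightarrow> A x \<in> M"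
    and lin: "lin_on M A" and h: "herm_on M A"
    and E: "finite E" "E \<subseteq> M" "corthonormal E" "A ` M \<subseteq> cspan E"
  shows "trace_on M A = (\<Sum>e\<in>E. cinner (A e) e)"
proof -
  have ex: "\<exists>B. finite B \<and> B \<subseteq> M \<and> corthonormal B \<and> A ` M \<subseteq> cspan B" using E by blast
  define B where "B = (SOME B. finite B \<and> B \<subseteq> M \<and> corthonormal B \<and> A ` M \<subseteq> cspan B)"
  have B: "finite B \<and> B \<subseteq> M \<and> corthonormal B \<and> A ` M \<subseteq> cspan B"
    unfolding B_def by (rule someI_ex[OF ex])
  have "trace_on M A = (\<Sum>e\<in>B. cinner (A e) e)" by (simp add: trace_on_def B_def[symmetric])
  also have "\<dots> = (\<Sum>e\<in>E. cinner (A e) e)"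
    using B by (intro trace_sum_eq[OF sub maps lin h _ _ _ _ E]) auto
  finally show ?thesis .
qed

lemma inv_on_unique:
  assumes B0: "\<And>x. x \<in> M \<Longrightarrow> B0 x \<in> M \<and> L (B0 x) = x \<and> B0 (L x) = x" and x: "x \<in> M"
  shows "inv_on M L x = B0 x"
proof -
  have ex: "\<exists>B. \<forall>x\<in>M. B x \<in> M \<and> L (B x) = x \<and> B (L x) = x" using B0 by blast
  have B: "\<forall>x\<in>M. inv_on M L x \<in> M \<and> L (inv_on M L x) = x \<and> inv_on M L (L x) = x"
    unfolding inv_on_def by (rule someI_ex[OF ex])
  have "inv_on M L x = inv_on M L (L (B0 x))" using B0[OF x] by simp
  also have "\<dots> = B0 x" using B B0[OF x] by blast
  finally show ?thesis .
qed

lemma adjoint_on_unique: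
  fixes A :: "'a::chilbert \<Rightarrow> 'a"
  assumes sub: "complex_vector.subspace M" and B0M: "\<And>y. y \<in> M \<Longrightarrow> B0 y \<in> M"
    and adj: "\<And>x y. x \<in> M \<Longrightarrow> y \<in> M \<Longrightarrow> cinner (A x) y = cinner x (B0 y)" and y: "y \<in> M"
  shows "adjoint_on M A y = B0 y"
proof -
  have ex: "\<exists>B. (\<forall>y\<in>M. B y \<in> M) \<and> (\<forall>x\<in>M. \<forall>y\<in>M. cinner (A x) y = cinner x (B y))"
    using B0M adj by blast
  have B: "(\<forall>y\<in>M. adjoint_on M A y \<in> M) \<and> (\<forall>x\<in>M. \<forall>y\<in>M. cinner (A x) y = cinner x (adjoint_on M A y))"
    unfolding adjoint_on_def by (rule someI_ex[OF ex])
  define d where "d = adjoint_on M A y - B0 y"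
  have dM: "d \<in> M" using B y B0M[OF y] sub by (simp add: d_def complex_vector.subspace_diff)
  have "cinner d d = cinner d (adjoint_on M A y) - cinner d (B0 y)" by (simp add: d_def cinner_diff_right)
  also have "\<dots> = 0" using B dM y adj[OF dM y] by simp
  finally show ?thesis by (simp add: d_def cinner_eq_zero_iff)
qed

lemma neumann_inv:
  fixes A :: "'a::chilbert \<Rightarrow> 'a"
  assumes lin: "clin A" and contr: "\<And>v. norm (A v) \<le> norm v" and w: "cmod w < 1"
  defines "L \<equiv> (\<lambda>y. y - w *\<^sub>C A y)"
  shows "\<forall>x. L (inv_on UNIV L x) = x \<and> inv_on UNIV L (L x) = x" and "clin (inv_on UNIV L)"
proof -
  define An where "An n = A ^^ n" for n
  have An_lin: "clin (An n)" for n unfolding An_def by (rule clin_iter[OF lin])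
  have An_bd: "norm (An n v) \<le> norm v" for n v unfolding An_def by (rule iter_bound[OF contr])
  have A_bl: "bounded_linear A" by (rule clin_bounded_linear[OF lin, where K=1]) (simp add: contr)
  have bc: "bounded_linear (\<lambda>v::'a. c *\<^sub>C v)" for c
    by (rule bounded_linear_intro[where K="cmod c"])
      (auto simp: complex_vector.scale_right_distrib norm_scaleC scaleR_scaleC complex_vector.scale_scale mult.commute)
  define f where "f x n = (w ^ n) *\<^sub>C An n x" for x n
  have summ: "summable (f x)" for x
  proof (rule summable_comparison_test[OF _ summable_mult2[OF summable_geometric[of "cmod w"], of "norm x"]])
    show "\<exists>N. \<forall>n\<ge>N. norm (f x n) \<le> cmod w ^ n * norm x"
      by (auto simp: f_def norm_scaleC norm_power An_bd mult_left_mono)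
  qed (use w in simp)
  define N where "N x = suminf (f x)" for x
  have fSuc: "w *\<^sub>C A (f x n) = f x (Suc n)" for x n
    by (simp add: f_def lin clin_scaleC An_def complex_vector.scale_scale)
  have LN: "L (N x) = x" for x
  proof -
    have "w *\<^sub>C A (N x) = (\<Sum>n. w *\<^sub>C A (f x n))"
      unfolding N_def using bounded_linear.suminf[OF bounded_linear_compose[OF bc A_bl] summ] by simp
    also have "\<dots> = (\<Sum>n. f x (Suc n))" by (simp add: fSuc)
    also have "\<dots> = N x - f x 0" unfolding N_def by (rule suminf_split_head[OF summ])
    finally show ?thesis by (simp add: L_def f_def An_def)
  qed
  have NL: "N (L x) = x" for x
  proof -
    have "f (L x) n = f x n - f x (Suc n)" for n
      by (simp add: f_def L_def clin_diff[OF clin_iter[OF lin]] clin_scaleC[OF clin_iter[OF lin]] An_def funpow_Suc_right complex_vector.scale_right_diff_distrib complex_vector.scale_scale del: funpow.simps)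
    then have "N (L x) = (\<Sum>n. f x n - f x (Suc n))" unfolding N_def by presburger
    also have "\<dots> = N x - (\<Sum>n. f x (Suc n))"
      unfolding N_def by (rule suminf_diff[OF summ summable_Suc_iff[THEN iffD2, OF summ], symmetric])
    also have "\<dots> = f x 0" unfolding N_def using suminf_split_head[OF summ] by simp
    finally show ?thesis by (simp add: f_def An_def)
  qed
  have inv_eq: "inv_on UNIV L x = N x" for x
    by (rule inv_on_unique) (auto simp: LN NL)
  show "\<forall>x. L (inv_on UNIV L x) = x \<and> inv_on UNIV L (L x) = x" by (simp add: inv_eq LN NL)
  have L_lin: "clin L" using lin by (simp add: clin_def L_def complex_vector.scale_right_distrib complex_vector.scale_right_diff_distrib complex_vector.scale_left_commute)
  have "clin N"
    unfolding clin_def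
  proof (intro conjI allI)
    fix x y c
    show "N (x + y) = N x + N y"
      by (metis LN NL L_lin clin_add)
    show "N (c *\<^sub>C x) = c *\<^sub>C N x"
      by (metis LN NL L_lin clin_scaleC)
  qed
  then show "clin (inv_on UNIV L)" by (simp add: inv_eq[abs_def])
qed

lemma vsp_c: "vector_space_pair (scaleC :: complex \<Rightarrow> 'a::complex_vector \<Rightarrow> 'a) (scaleC :: complex \<Rightarrow> 'b::complex_vector \<Rightarrow> 'b)"
  by (rule vector_space_pair.intro) (rule complex_vector.vector_space_axioms)+

lemma rank_transfer:
  fixes f :: "'a::complex_vector \<Rightarrow> 'b::complex_vector"
  assumes lf: "Vector_Spaces.linear scaleC scaleC f" and inj: "inj_on f (cspan X)"
  shows "(\<exists>B. finite B \<and> X \<subseteq> cspan B) \<longleftrightarrow> (\<exists>B. finite B \<and> f ` X \<subseteq> cspan B)"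
    and "(\<exists>B. finite B \<and> X \<subseteq> cspan B) \<Longrightarrow> cdim (f ` X) = cdim X"
proof -
  have mh: "module_hom scaleC scaleC f" using lf by (simp add: linear_iff_module_hom)
  show "(\<exists>B. finite B \<and> X \<subseteq> cspan B) \<longleftrightarrow> (\<exists>B. finite B \<and> f ` X \<subseteq> cspan B)"
  proof
    assume "\<exists>B. finite B \<and> X \<subseteq> cspan B"
    then obtain B where "finite B" "X \<subseteq> cspan B" by blast
    then show "\<exists>B. finite B \<and> f ` X \<subseteq> cspan B"
      using module_hom.spans_image[OF mh, of X B] unfolding cspan_raw_def by blast
  next
    assume "\<exists>B. finite B \<and> f ` X \<subseteq> cspan B"
    then obtain B where B: "finite B" "f ` X \<subseteq> cspan B" by blast
    obtain g where g: "Vector_Spaces.linear scaleC scaleC g" "\<forall>x\<in>cspan X. g (f x) = x"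
      using vector_space_pair.linear_inj_on_left_inverse[OF vsp_c lf inj[unfolded cspan_raw_def]]
      unfolding cspan_raw_def by blast
    have mg: "module_hom scaleC scaleC g" using g(1) by (simp add: linear_iff_module_hom)
    have "X = g ` (f ` X)"
      using g(2) complex_vector.span_superset[of X] by (force simp: image_image)
    also have "\<dots> \<subseteq> cspan (g ` B)"
      using module_hom.spans_image[OF mg, of "f ` X" B] B(2) unfolding cspan_raw_def by blast
    finally show "\<exists>B. finite B \<and> X \<subseteq> cspan B" using B(1) by blast
  qed
next
  assume "\<exists>B. finite B \<and> X \<subseteq> cspan B"
  then obtain B0 where B0: "finite B0" "X \<subseteq> cspan B0" by blast
  obtain B where B: "B \<subseteq> X" "complex_vector.independent B" "X \<subseteq> cspan B" "card B = cdim X"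
    using complex_vector.basis_exists[of X] by blast
  have finB: "finite B"
    using complex_vector.independent_span_bound[OF B0(1) B(2)] B(1) B0(2) by blast
  have mh: "module_hom scaleC scaleC f" using lf by (simp add: linear_iff_module_hom)
  have injB: "inj_on f (cspan B)"
    using inj complex_vector.span_mono[OF B(1)] inj_on_subset by blast
  have indep: "complex_vector.independent (f ` B)"
    using module_hom.independent_injective_image[OF mh B(2)[unfolded cspan_raw_def]] injB
    unfolding cspan_raw_def by blast
  have "f ` X \<subseteq> cspan (f ` B)"
    using module_hom.spans_image[OF mh, of X B] B(3) unfolding cspan_raw_def by blast
  moreover have "card (f ` B) = card B"
    using injB complex_vector.span_superset[of B] by (intro card_image) (rule inj_on_subset)
  ultimately show "cdim (f ` X) = cdim X"
    using B by (intro complex_vector.dim_unique[OF _ _ indep]) auto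
qed

lemma rank_on_transfer:
  fixes f :: "'a::chilbert \<Rightarrow> 'b::chilbert"
  assumes lf: "Vector_Spaces.linear scaleC scaleC f" and inj: "inj_on f (cspan (A ` M))"
    and img: "A' ` M' = f ` (A ` M)"
  shows "rank_on M' A' = rank_on M A"
  unfolding rank_on_def img using rank_transfer[OF lf inj] by auto

lemma fin_inj_endo:
  fixes D :: "'a::complex_vector \<Rightarrow> 'a"
  assumes sub: "complex_vector.subspace V" and fin: "finite B0" "V \<subseteq> cspan B0"
    and lin: "clin D" and maps: "D ` V \<subseteq> V" and inj: "inj_on D V"
  shows "V \<subseteq> D ` V"
proof -
  have lf: "Vector_Spaces.linear scaleC scaleC D"
    using lin by (simp add: Vector_Spaces.linear_iff clin_def complex_vector.vector_space_axioms vector_space_pair.intro)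
  have mh: "module_hom scaleC scaleC D" using lf by (simp add: linear_iff_module_hom)
  obtain B where B: "B \<subseteq> V" "complex_vector.independent B" "V \<subseteq> cspan B" "card B = cdim V"
    using complex_vector.basis_exists[of V] by blast
  have finB: "finite B"
    using complex_vector.independent_span_bound[OF fin(1) B(2)] B(1) fin(2) by blast
  have spanBV: "cspan B \<subseteq> V" using B(1) sub by (rule complex_vector.span_minimal)
  have injB: "inj_on D (cspan B)" using inj spanBV inj_on_subset by blast
  have indep: "complex_vector.independent (D ` B)"
    using module_hom.independent_injective_image[OF mh B(2)[unfolded cspan_raw_def]] injB
    unfolding cspan_raw_def by blast
  have cardDB: "card (D ` B) = card B"
    using injB complex_vector.span_superset[of B] by (intro card_image) (rule inj_on_subset)
  have "V \<subseteq> cspan (D ` B)"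
  proof
    fix v assume v: "v \<in> V"
    show "v \<in> cspan (D ` B)"
    proof (rule ccontr)
      assume nv: "v \<notin> cspan (D ` B)"
      have ind2: "complex_vector.independent (insert v (D ` B))"
        using complex_vector.independent_insertI[OF nv indep] .
      have "insert v (D ` B) \<subseteq> cspan B" using v B(1,3) maps by auto
      then have "card (insert v (D ` B)) \<le> card B"
        using complex_vector.independent_span_bound[OF finB ind2] by blast
      moreover have "card (insert v (D ` B)) = card B + 1"
        using nv cardDB finB complex_vector.span_superset[of "D ` B"] by (subst card_insert_disjoint) auto
      ultimately show False by simp
    qed
  qed
  also have "cspan (D ` B) = D ` cspan B"
    using module_hom.span_image[OF mh, of B] unfolding cspan_raw_def .
  also have "\<dots> \<subseteq> D ` V" using spanBV by blast
  finally show ?thesis .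
qed

locale curv_setup =
  fixes T :: "'a::chilbert \<Rightarrow> 'a"
  assumes bounded: "bop_on UNIV T" and contraction: "\<forall>x. norm (T x) \<le> norm x"
    and finite_rank: "rank_on UNIV (defect_on UNIV T) \<noteq> \<infinity>"
begin

abbreviation "Ts \<equiv> adjoint_on UNIV T"
abbreviation "D \<equiv> defect_on UNIV T"
abbreviation "R \<equiv> range (\<lambda>x. x - T (Ts x))"

lemma T_lin: "clin T" using bounded bop_UNIV by blast
lemma T_contr: "norm (T x) \<le> norm x" using contraction by blast
lemma Ts_adj: "cinner (T x) y = cinner x (Ts y)" by (rule adjoint_on_UNIV[OF bounded])
lemma Ts_adj': "cinner (Ts y) x = cinner y (T x)" by (metis Ts_adj cinner_commute)
lemma Ts_lin: "clin Ts" by (rule adj_clin[OF Ts_adj])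
lemma Ts_contr: "norm (Ts y) \<le> norm y"
  using adj_bound[of T Ts 1 y] Ts_adj T_contr by simp

lemma X_lin: "clin (\<lambda>x. T (Ts x))" by (rule clin_comp[OF T_lin Ts_lin])
lemma X_contr: "norm (T (Ts x)) \<le> norm x" using T_contr[of "Ts x"] Ts_contr[of x] by simp
lemma X_herm: "herm (\<lambda>x. T (Ts x))"
  unfolding herm_def by (simp add: Ts_adj Ts_adj')

lemma D_props: "bop_on UNIV D \<and> (\<forall>x\<in>UNIV. Im (cinner (D x) x) = 0 \<and> 0 \<le> Re (cinner (D x) x))
        \<and> (\<forall>x\<in>UNIV. D (D x) = x - T (Ts x))"
proof -
  obtain S where S: "clin S" "\<exists>K. \<forall>x. norm (S x) \<le> K * norm x"
     "\<forall>x. Im (cinner (S x) x) = 0 \<and> 0 \<le> Re (cinner (S x) x)" "\<forall>x. S (S x) = x - T (Ts x)"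
    using sqrt_exists[OF X_lin X_contr X_herm] by blast
  have ex: "\<exists>S. bop_on UNIV S \<and> (\<forall>x\<in>UNIV. Im (cinner (S x) x) = 0 \<and> 0 \<le> Re (cinner (S x) x))
        \<and> (\<forall>x\<in>UNIV. S (S x) = x - T (Ts x))"
    using S by (intro exI[of _ S]) (simp add: bop_UNIV)
  show ?thesis unfolding defect_on_def sqrt_on_def by (rule someI_ex[OF ex])
qed

lemma D_lin: "clin D" using D_props bop_UNIV by blast
lemma D_bd: "\<exists>K. \<forall>x. norm (D x) \<le> K * norm x" using D_props bop_UNIV by blast
lemma D_DD: "D (D x) = x - T (Ts x)" using D_props by blast
lemma D_herm: "herm D" by (rule polarization_herm[OF D_lin]) (use D_props in blast)
lemma D_herm': "cinner (D x) y = cinner x (D y)" using D_herm by (simp add: herm_def)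

lemma D_inj_range: "D (D w) = 0 \<Longrightarrow> D w = 0"
proof -
  assume "D (D w) = 0"
  then have "cinner (D w) (D w) = 0" by (simp add: D_herm'[symmetric])
  then show "D w = 0" by (simp add: cinner_eq_zero_iff)
qed

lemma subspace_range_clin: "clin A \<Longrightarrow> complex_vector.subspace (range A)"
  unfolding complex_vector.subspace_def
  by (metis (no_types, lifting) clin_add clin_scaleC clin_zero rangeE range_eqI)

lemma rangeD_eq: "R = range D"
proof
  show "R \<subseteq> range D" by (auto simp: D_DD[symmetric])
  obtain B0 where B0: "finite B0" "range D \<subseteq> cspan B0"
    using finite_rank unfolding rank_on_def by (auto split: if_splits)
  have "range D \<subseteq> D ` range D"
  proof (rule fin_inj_endo[OF subspace_range_clin[OF D_lin] B0 D_lin])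
    show "D ` range D \<subseteq> range D" by auto
    show "inj_on D (range D)"
    proof (rule inj_onI)
      fix x y assume "x \<in> range D" "y \<in> range D" "D x = D y"
      then obtain a b where ab: "x = D a" "y = D b" by auto
      have "D (D (a - b)) = 0" using \<open>D x = D y\<close> ab by (simp add: D_lin clin_diff)
      then have "D (a - b) = 0" by (rule D_inj_range)
      then show "x = y" using ab by (simp add: D_lin clin_diff)
    qed
  qed
  also have "D ` range D = R" by (auto simp: D_DD[symmetric] image_image)
  finally show "range D \<subseteq> R" .
qed

lemma R_sub: "complex_vector.subspace R"
  unfolding rangeD_eq by (rule subspace_range_clin[OF D_lin])

lemma D_in_R: "D x \<in> R" unfolding rangeD_eq by simp

lemma R_fin: "\<exists>B. finite B \<and> R \<subseteq> cspan B"
  using finite_rank unfolding rank_on_def rangeD_eq by (auto split: if_splits)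

lemma basis_E: "\<exists>E. finite E \<and> E \<subseteq> R \<and> corthonormal E \<and> R \<subseteq> cspan E"
proof -
  obtain B0 where B0: "finite B0" "R \<subseteq> cspan B0" using R_fin by blast
  obtain B where B: "B \<subseteq> R" "complex_vector.independent B" "R \<subseteq> cspan B" "card B = cdim R"
    by (rule complex_vector.basis_exists[of R])
  have finB: "finite B"
    using complex_vector.independent_span_bound[OF B0(1) B(2)] B(1) B0(2) by blast
  obtain E where E: "finite E" "corthonormal E" "cspan E = cspan B"
    using gram_schmidt[OF finB] by blast
  have "cspan B \<subseteq> R" using B(1) R_sub by (rule complex_vector.span_minimal)
  then have "E \<subseteq> R" using E(3) complex_vector.span_superset[of E] by blast
  then show ?thesis using E B(3) by blast
qed

definition Vw :: "complex \<Rightarrow> 'a \<Rightarrow> 'a" where "Vw w = inv_on UNIV (\<lambda>y. y - w *\<^sub>C T y)"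
definition Uw :: "complex \<Rightarrow> 'a \<Rightarrow> 'a" where "Uw w = inv_on UNIV (\<lambda>y. y - w *\<^sub>C Ts y)"

lemma Vw_props:
  assumes "cmod w < 1"
  shows "Vw w x - w *\<^sub>C T (Vw w x) = x" "Vw w (x - w *\<^sub>C T x) = x" "clin (Vw w)"
  using neumann_inv[OF T_lin T_contr assms] unfolding Vw_def by blast+

lemma Uw_props:
  assumes "cmod w < 1"
  shows "Uw w x - w *\<^sub>C Ts (Uw w x) = x" "Uw w (x - w *\<^sub>C Ts x) = x" "clin (Uw w)"
  using neumann_inv[OF Ts_lin Ts_contr assms] unfolding Uw_def by blast+

lemma UV_adj:
  assumes w: "cmod w < 1"
  shows "cinner (Uw (cnj w) a) b = cinner a (Vw w b)"
proof -
  have w': "cmod (cnj w) < 1" using w by simp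
  have "cinner (Uw (cnj w) a) b = cinner (Uw (cnj w) a) (Vw w b - w *\<^sub>C T (Vw w b))"
    using Vw_props(1)[OF w] by simp
  also have "\<dots> = cinner (Uw (cnj w) a) (Vw w b) - cnj w * cinner (Ts (Uw (cnj w) a)) (Vw w b)"
    by (simp add: cinner_diff_right cinner_scaleC_right Ts_adj')
  also have "\<dots> = cinner (Uw (cnj w) a - cnj w *\<^sub>C Ts (Uw (cnj w) a)) (Vw w b)"
    by (simp add: cinner_diff_left cinner_scaleC_left)
  also have "\<dots> = cinner a (Vw w b)" using Uw_props(1)[OF w'] by simp
  finally show ?thesis .
qed

end

lemma cinner_pair: "cinner (a, b) (c, d) = cinner a c + cinner b d"
  by (simp add: cinner_prod_def)
lemma scaleC_pair: "c *\<^sub>C (a, b) = (c *\<^sub>C a, c *\<^sub>C b)"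
  by (simp add: scaleC_prod_def)

context curv_setup
begin

definition "M = (UNIV :: 'a set) \<times> R"
definition "Q = (\<lambda>(x, y). (T x + D y, 0 :: 'a))"
definition "Qs = (\<lambda>(u, v). (Ts u, D u))"
definition "PQ = (\<lambda>(u::'a, v::'a). (0::'a, v))"

lemma mem_M: "(x, y) \<in> M \<longleftrightarrow> y \<in> R" by (simp add: M_def)

lemma zero_R: "0 \<in> R" using complex_vector.subspace_0[OF R_sub] .
lemma R_add: "a \<in> R \<Longrightarrow> b \<in> R \<Longrightarrow> a + b \<in> R" using complex_vector.subspace_add[OF R_sub] .
lemma R_scale: "a \<in> R \<Longrightarrow> c *\<^sub>C a \<in> R" using complex_vector.subspace_scale[OF R_sub] .

lemma M_sub: "complex_vector.subspace M"
proof (unfold complex_vector.subspace_def, intro conjI ballI allI)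
  show "0 \<in> M" by (simp add: zero_prod_def mem_M zero_R)
  fix x y assume "x \<in> M" "y \<in> M"
  then show "x + y \<in> M" by (cases x, cases y) (simp add: mem_M R_add)
next
  fix c x assume "x \<in> M"
  then show "c *\<^sub>C x \<in> M" by (cases x) (simp add: mem_M scaleC_pair R_scale)
qed

lemma Q_M: "Q v \<in> M" by (cases v) (simp add: Q_def mem_M zero_R)
lemma Qs_M: "Qs v \<in> M" by (cases v) (simp add: Qs_def mem_M D_in_R)
lemma PQ_M: "v \<in> M \<Longrightarrow> PQ v \<in> M" by (cases v) (simp add: PQ_def mem_M)

lemma Q_adj: "cinner (Q x) y = cinner x (Qs y)"
  by (cases x, cases y) (simp add: Q_def Qs_def cinner_pair cinner_add_left Ts_adj D_herm')

lemma adjQ: "y \<in> M \<Longrightarrow> adjoint_on M Q y = Qs y"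
  by (rule adjoint_on_unique[OF M_sub]) (auto simp: Qs_M Q_adj)

lemma QQs: "Q (Qs v) = (fst v, 0)"
  by (cases v) (simp add: Q_def Qs_def D_DD)

lemma defQ: "v \<in> M \<Longrightarrow> v - Q (adjoint_on M Q v) = PQ v"
  by (cases v) (simp add: adjQ QQs PQ_def)

lemma Q_lin: "clin Q"
  unfolding clin_def Q_def
  by (auto simp: T_lin D_lin clin_add clin_scaleC scaleC_pair complex_vector.scale_right_distrib)

lemma Qs_lin: "clin Qs"
  unfolding clin_def Qs_def
  by (auto simp: Ts_lin D_lin clin_add clin_scaleC scaleC_pair)

lemma PQ_lin: "clin PQ"
  unfolding clin_def PQ_def by (auto simp: scaleC_pair)

lemma sqrt_unique_PQ:
  assumes S: "bop_on M S" "\<forall>x\<in>M. Im (cinner (S x) x) = 0 \<and> 0 \<le> Re (cinner (S x) x)"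
    "\<forall>x\<in>M. S (S x) = x - Q (adjoint_on M Q x)"
    and x: "x \<in> M"
  shows "S x = PQ x"
proof -
  have SM: "v \<in> M \<Longrightarrow> S v \<in> M" for v using S(1) by (simp add: bop_on_def)
  have Sadd: "v \<in> M \<Longrightarrow> u \<in> M \<Longrightarrow> S (v + u) = S v + S u" for v u using S(1) by (simp add: bop_on_def)
  have Ssc: "v \<in> M \<Longrightarrow> S (c *\<^sub>C v) = c *\<^sub>C S v" for v c using S(1) by (simp add: bop_on_def)
  have SS: "v \<in> M \<Longrightarrow> S (S v) = PQ v" for v using S(3) defQ by simp
  obtain a b where ab: "x = (a, b)" by (cases x)
  have bR: "b \<in> R" using x ab by (simp add: mem_M)
  define x1 where "x1 = (a, 0::'a)"
  define x2 where "x2 = (0::'a, b)"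
  have x1M: "x1 \<in> M" by (simp add: x1_def mem_M zero_R)
  have x2M: "x2 \<in> M" by (simp add: x2_def mem_M bR)
  have S1: "S x1 = 0"
  proof -
    define u where "u = S x1"
    have uM: "u \<in> M" using SM[OF x1M] by (simp add: u_def)
    have Su: "S u = 0" using SS[OF x1M] by (simp add: u_def x1_def PQ_def zero_prod_def)
    have "\<forall>t. 0 \<le> Re (cinner u x1) * t\<^sup>2 + (norm u)\<^sup>2 * t"
    proof
      fix t :: real
      have tx1M: "complex_of_real t *\<^sub>C x1 \<in> M"
        using x1M M_sub by (simp add: complex_vector.subspace_scale)
      have "u + complex_of_real t *\<^sub>C x1 \<in> M" using uM tx1M M_sub by (simp add: complex_vector.subspace_add)
      then have "0 \<le> Re (cinner (S (u + complex_of_real t *\<^sub>C x1)) (u + complex_of_real t *\<^sub>C x1))"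
        using S(2) by blast
      also have "S (u + complex_of_real t *\<^sub>C x1) = complex_of_real t *\<^sub>C u"
        using Sadd[OF uM tx1M] Ssc[OF x1M] Su by (simp add: u_def)
      also have "Re (cinner (complex_of_real t *\<^sub>C u) (u + complex_of_real t *\<^sub>C x1)) = Re (cinner u x1) * t\<^sup>2 + (norm u)\<^sup>2 * t"
        by (simp add: cinner_scaleC_left cinner_add_right cinner_scaleC_right cinner_self_norm power2_eq_square algebra_simps)
      finally show "0 \<le> Re (cinner u x1) * t\<^sup>2 + (norm u)\<^sup>2 * t" .
    qed
    then have "(norm u)\<^sup>2 = 0" by (rule quad_nonneg_imp)
    then show ?thesis by (simp add: u_def)
  qed
  have S2: "S x2 = x2"
  proof -
    define y where "y = S x2 - x2"
    have yM: "y \<in> M" using SM[OF x2M] x2M M_sub by (simp add: y_def complex_vector.subspace_diff)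
    have PQx2: "PQ x2 = x2" by (simp add: x2_def PQ_def)
    have "S y = S (S x2) - S x2"
      using Sadd[OF yM x2M] by (simp add: y_def eq_diff_eq)
    also have "\<dots> = - y" using SS[OF x2M] PQx2 by (simp add: y_def)
    finally have Sy: "S y = - y" .
    have "0 \<le> Re (cinner (S y) y)" using S(2) yM by blast
    then have "0 \<le> - (norm y)\<^sup>2" by (simp add: Sy cinner_minus_left cinner_self_norm)
    then have "y = 0" by simp
    then show ?thesis by (simp add: y_def)
  qed
  have "x = x1 + x2" by (simp add: ab x1_def x2_def)
  then have "S x = S x1 + S x2" using Sadd[OF x1M x2M] by simp
  then show ?thesis using S1 S2 by (simp add: ab x2_def PQ_def)
qed

lemma defect_Q: "x \<in> M \<Longrightarrow> defect_on M Q x = PQ x"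
proof -
  assume x: "x \<in> M"
  have ex: "\<exists>S. bop_on M S \<and> (\<forall>x\<in>M. Im (cinner (S x) x) = 0 \<and> 0 \<le> Re (cinner (S x) x))
        \<and> (\<forall>x\<in>M. S (S x) = x - Q (adjoint_on M Q x))"
  proof (intro exI[of _ PQ] conjI)
    show "bop_on M PQ"
      unfolding bop_on_def
    proof (intro conjI)
      show "\<forall>x\<in>M. PQ x \<in> M" using PQ_M by blast
      show "\<forall>x\<in>M. \<forall>y\<in>M. PQ (x + y) = PQ x + PQ y" using PQ_lin by (simp add: clin_add)
      show "\<forall>c. \<forall>x\<in>M. PQ (c *\<^sub>C x) = c *\<^sub>C PQ x" using PQ_lin by (simp add: clin_scaleC)
      show "\<exists>K. \<forall>x\<in>M. norm (PQ x) \<le> K * norm x"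
        by (rule exI[of _ 1]) (auto simp: PQ_def norm_Pair)
    qed
    show "\<forall>x\<in>M. Im (cinner (PQ x) x) = 0 \<and> 0 \<le> Re (cinner (PQ x) x)"
      by (auto simp: PQ_def cinner_pair cinner_ge_zero)
    show "\<forall>x\<in>M. PQ (PQ x) = x - Q (adjoint_on M Q x)"
      by (auto simp: defQ PQ_def)
  qed
  have "bop_on M (defect_on M Q) \<and> (\<forall>x\<in>M. Im (cinner (defect_on M Q x) x) = 0 \<and> 0 \<le> Re (cinner (defect_on M Q x) x))
        \<and> (\<forall>x\<in>M. defect_on M Q (defect_on M Q x) = x - Q (adjoint_on M Q x))"
    unfolding defect_on_def sqrt_on_def by (rule someI_ex[OF ex])
  then show ?thesis using sqrt_unique_PQ x by blast
qed

end

context curv_setup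
begin

lemma invVQ:
  assumes w: "cmod w < 1" and x: "x \<in> M"
  shows "inv_on M (\<lambda>y. y - w *\<^sub>C Q y) x = (case x of (a, b) \<Rightarrow> (Vw w (a + w *\<^sub>C D b), b))"
proof (rule inv_on_unique[OF _ x])
  fix x assume x: "x \<in> M"
  obtain a b where ab: "x = (a, b)" by (cases x)
  have bR: "b \<in> R" using x ab by (simp add: mem_M)
  let ?B0 = "\<lambda>x. case x of (a, b) \<Rightarrow> (Vw w (a + w *\<^sub>C D b), b)"
  have 1: "?B0 x \<in> M" using bR by (simp add: ab mem_M)
  have "?B0 x - w *\<^sub>C Q (?B0 x) = (Vw w (a + w *\<^sub>C D b) - w *\<^sub>C T (Vw w (a + w *\<^sub>C D b)) - w *\<^sub>C D b, b)"
    by (simp add: ab Q_def scaleC_pair complex_vector.scale_right_distrib algebra_simps)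
  also have "\<dots> = x" using Vw_props(1)[OF w] by (simp add: ab)
  finally have 2: "?B0 x - w *\<^sub>C Q (?B0 x) = x" .
  have "x - w *\<^sub>C Q x = (a - w *\<^sub>C T a - w *\<^sub>C D b, b)"
    by (simp add: ab Q_def scaleC_pair complex_vector.scale_right_distrib algebra_simps)
  then have "?B0 (x - w *\<^sub>C Q x) = (Vw w (a - w *\<^sub>C T a), b)" by simp
  also have "\<dots> = x" using Vw_props(2)[OF w] by (simp add: ab)
  finally have 3: "?B0 (x - w *\<^sub>C Q x) = x" .
  show "?B0 x \<in> M \<and> ?B0 x - w *\<^sub>C Q (?B0 x) = x \<and> ?B0 (x - w *\<^sub>C Q x) = x"
    using 1 2 3 by blast
qed

lemma invUQ:
  assumes w: "cmod w < 1" and x: "x \<in> M"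
  shows "inv_on M (\<lambda>y. y - w *\<^sub>C adjoint_on M Q y) x = (case x of (a, b) \<Rightarrow> (Uw w a, b + w *\<^sub>C D (Uw w a)))"
proof (rule inv_on_unique[OF _ x])
  fix x assume x: "x \<in> M"
  obtain a b where ab: "x = (a, b)" by (cases x)
  have bR: "b \<in> R" using x ab by (simp add: mem_M)
  let ?B0 = "\<lambda>x. case x of (a, b) \<Rightarrow> (Uw w a, b + w *\<^sub>C D (Uw w a))"
  have 1: "?B0 x \<in> M" using bR by (simp add: ab mem_M R_add R_scale D_in_R)
  have "?B0 x - w *\<^sub>C adjoint_on M Q (?B0 x) = ?B0 x - w *\<^sub>C Qs (?B0 x)" using 1 by (simp add: adjQ)
  also have "\<dots> = (Uw w a - w *\<^sub>C Ts (Uw w a), b)"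
    by (simp add: ab Qs_def scaleC_pair)
  also have "\<dots> = x" using Uw_props(1)[OF w] by (simp add: ab)
  finally have 2: "?B0 x - w *\<^sub>C adjoint_on M Q (?B0 x) = x" .
  have "x - w *\<^sub>C adjoint_on M Q x = (a - w *\<^sub>C Ts a, b - w *\<^sub>C D a)"
    using x by (simp add: adjQ ab Qs_def scaleC_pair)
  then have "?B0 (x - w *\<^sub>C adjoint_on M Q x) = (Uw w (a - w *\<^sub>C Ts a), b - w *\<^sub>C D a + w *\<^sub>C D (Uw w (a - w *\<^sub>C Ts a)))"
    by simp
  also have "\<dots> = x" using Uw_props(2)[OF w] by (simp add: ab)
  finally have 3: "?B0 (x - w *\<^sub>C adjoint_on M Q x) = x" .
  show "?B0 x \<in> M \<and> ?B0 x - w *\<^sub>C adjoint_on M Q (?B0 x) = x \<and> ?B0 (x - w *\<^sub>C adjoint_on M Q x) = x"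
    using 1 2 3 by blast
qed

definition AT :: "real \<Rightarrow> complex \<Rightarrow> 'a \<Rightarrow> 'a" where
  "AT r z = (\<lambda>x. D (Uw (complex_of_real r * z) (Vw (complex_of_real r * cnj z) (D x))))"

lemma cmod_rz: "\<bar>r\<bar> < 1 \<Longrightarrow> cmod z = 1 \<Longrightarrow> cmod (complex_of_real r * z) < 1"
  by (simp add: norm_mult)
lemma cmod_rcz: "\<bar>r\<bar> < 1 \<Longrightarrow> cmod z = 1 \<Longrightarrow> cmod (complex_of_real r * cnj z) < 1"
  by (simp add: norm_mult)

lemma AQ_eq:
  assumes r: "\<bar>r\<bar> < 1" and z: "cmod z = 1" and x: "x \<in> M"
  shows "defect_on M Q (inv_on M (\<lambda>y. y - (complex_of_real r * z) *\<^sub>C adjoint_on M Q y)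
            (inv_on M (\<lambda>y. y - (complex_of_real r * cnj z) *\<^sub>C Q y) (defect_on M Q x)))
         = (0, snd x + complex_of_real (r\<^sup>2) *\<^sub>C AT r z (snd x))"
proof -
  define w where "w = complex_of_real r * cnj z"
  define w' where "w' = complex_of_real r * z"
  have w: "cmod w < 1" unfolding w_def by (rule cmod_rcz[OF r z])
  have w': "cmod w' < 1" unfolding w'_def by (rule cmod_rz[OF r z])
  obtain a b where ab: "x = (a, b)" by (cases x)
  have bR: "b \<in> R" using x ab by (simp add: mem_M)
  have d1: "defect_on M Q x = (0, b)" using defect_Q[OF x] by (simp add: ab PQ_def)
  have m1: "(0, b) \<in> M" using bR by (simp add: mem_M)
  have d2: "inv_on M (\<lambda>y. y - w *\<^sub>C Q y) (0, b) = (Vw w (w *\<^sub>C D b), b)"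
    using invVQ[OF w m1] by simp
  have m2: "(Vw w (w *\<^sub>C D b), b) \<in> M" using bR by (simp add: mem_M)
  define u where "u = Uw w' (Vw w (w *\<^sub>C D b))"
  have d3: "inv_on M (\<lambda>y. y - w' *\<^sub>C adjoint_on M Q y) (Vw w (w *\<^sub>C D b), b) = (u, b + w' *\<^sub>C D u)"
    using invUQ[OF w' m2] by (simp add: u_def)
  have m3: "(u, b + w' *\<^sub>C D u) \<in> M" using bR by (simp add: mem_M R_add R_scale D_in_R)
  have d4: "defect_on M Q (u, b + w' *\<^sub>C D u) = (0, b + w' *\<^sub>C D u)"
    using defect_Q[OF m3] by (simp add: PQ_def)
  have "w' *\<^sub>C D u = (w' * w) *\<^sub>C AT r z b"
    unfolding u_def AT_def w_def[symmetric] w'_def[symmetric]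
    by (simp add: D_lin clin_scaleC Vw_props(3)[OF w] Uw_props(3)[OF w'] complex_vector.scale_scale)
  also have "w' * w = complex_of_real (r\<^sup>2)"
  proof -
    have "w' * w = complex_of_real (r\<^sup>2) * (z * cnj z)" by (simp add: w_def w'_def power2_eq_square)
    also have "z * cnj z = 1" using z complex_norm_square[of z] by simp
    finally show ?thesis by simp
  qed
  finally have e: "w' *\<^sub>C D u = complex_of_real (r\<^sup>2) *\<^sub>C AT r z b" .
  show ?thesis
    unfolding d1 w_def[symmetric] w'_def[symmetric] d2 d3 unfolding d4 unfolding e by (simp add: ab)
qed

lemma AT_lin: "\<bar>r\<bar> < 1 \<Longrightarrow> cmod z = 1 \<Longrightarrow> clin (AT r z)"
  unfolding AT_def
  by (intro clin_comp[OF D_lin] clin_comp[OF Uw_props(3)] clin_comp[OF Vw_props(3)] D_lin cmod_rz cmod_rcz) auto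

lemma AT_herm:
  assumes r: "\<bar>r\<bar> < 1" and z: "cmod z = 1"
  shows "herm (AT r z)"
proof -
  define w where "w = complex_of_real r * cnj z"
  have w: "cmod w < 1" unfolding w_def by (rule cmod_rcz[OF r z])
  have cw: "cnj w = complex_of_real r * z" by (simp add: w_def)
  have key: "cinner (AT r z x) y = cinner (Vw w (D x)) (Vw w (D y))" for x y
    unfolding AT_def w_def[symmetric] cw[symmetric]
    by (simp add: D_herm'[of "Uw (cnj w) _"] UV_adj[OF w])
  show ?thesis unfolding herm_def
  proof (intro allI)
    fix x y
    have "cinner x (AT r z y) = cnj (cinner (AT r z y) x)" by (rule cinner_commute)
    also have "\<dots> = cinner (Vw w (D x)) (Vw w (D y))" by (simp add: key cnj_cinner)
    finally show "cinner (AT r z x) y = cinner x (AT r z y)" by (simp add: key)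
  qed
qed

lemma AT_R: "AT r z x \<in> R" unfolding AT_def by (rule D_in_R)

definition "Eb = (SOME E. finite E \<and> E \<subseteq> R \<and> corthonormal E \<and> R \<subseteq> cspan E)"
lemma Eb: "finite Eb" "Eb \<subseteq> R" "corthonormal Eb" "R \<subseteq> cspan Eb"
  using someI_ex[OF basis_E] unfolding Eb_def[symmetric] by blast+

lemma trace_T:
  assumes r: "\<bar>r\<bar> < 1" and z: "cmod z = 1"
  shows "trace_on UNIV (AT r z) = (\<Sum>e\<in>Eb. cinner (AT r z e) e)"
proof (rule trace_on_eq)
  show "complex_vector.subspace (UNIV :: 'a set)" by simp
  show "lin_on UNIV (AT r z)" using AT_lin[OF r z] by (simp add: lin_on_def clin_def)
  show "herm_on UNIV (AT r z)" using AT_herm[OF r z] by (simp add: herm_on_def herm_def)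
  show "AT r z ` UNIV \<subseteq> cspan Eb" using AT_R Eb(4) by blast
qed (use Eb in auto)

end

lemma lin_Pair0: "Vector_Spaces.linear scaleC scaleC (\<lambda>b::'a::complex_vector. (0::'b::complex_vector, b))"
  by (simp add: Vector_Spaces.linear_iff complex_vector.vector_space_axioms vector_space_pair.intro scaleC_prod_def)

lemma lin_fst: "Vector_Spaces.linear scaleC scaleC (fst :: 'a::complex_vector \<times> 'b::complex_vector \<Rightarrow> 'a)"
  by (simp add: Vector_Spaces.linear_iff complex_vector.vector_space_axioms vector_space_pair.intro scaleC_prod_def)

lemma Lim_rel:
  fixes f g :: "real \<Rightarrow> complex"
  assumes ev: "eventually (\<lambda>r. g r = complex_of_real (r\<^sup>2) * f r + complex_of_real (1 - r\<^sup>2) * c) (at_left 1)"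
  shows "Lim (at_left 1) g = Lim (at_left 1) f"
proof -
  have r1: "((\<lambda>r. complex_of_real (r\<^sup>2)) \<longlongrightarrow> 1) (at_left (1::real))"
  proof -
    have "((\<lambda>r::real. r\<^sup>2) \<longlongrightarrow> 1\<^sup>2) (at_left 1)" by (intro tendsto_intros)
    then show ?thesis using tendsto_of_real by fastforce
  qed
  have r0: "((\<lambda>r. complex_of_real (1 - r\<^sup>2)) \<longlongrightarrow> 0) (at_left (1::real))"
  proof -
    have "((\<lambda>r::real. 1 - r\<^sup>2) \<longlongrightarrow> 1 - 1\<^sup>2) (at_left 1)" by (intro tendsto_intros)
    then show ?thesis using tendsto_of_real by fastforce
  qed
  have pos: "eventually (\<lambda>r::real. r > 0) (at_left 1)"
    using eventually_at_left_real[of 0 1] by (auto elim: eventually_mono)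
  have iff: "(g \<longlongrightarrow> L) (at_left 1) \<longleftrightarrow> (f \<longlongrightarrow> L) (at_left 1)" for L
  proof
    assume "(f \<longlongrightarrow> L) (at_left 1)"
    then have "((\<lambda>r. complex_of_real (r\<^sup>2) * f r + complex_of_real (1 - r\<^sup>2) * c) \<longlongrightarrow> 1 * L + 0 * c) (at_left 1)"
      by (intro tendsto_intros r1 r0)
    then show "(g \<longlongrightarrow> L) (at_left 1)" using ev by (simp add: tendsto_cong)
  next
    assume g: "(g \<longlongrightarrow> L) (at_left 1)"
    have ev2: "eventually (\<lambda>r. f r = (g r - complex_of_real (1 - r\<^sup>2) * c) / complex_of_real (r\<^sup>2)) (at_left 1)"
      using ev pos by eventually_elim (auto simp: field_simps)
    have "((\<lambda>r. (g r - complex_of_real (1 - r\<^sup>2) * c) / complex_of_real (r\<^sup>2)) \<longlongrightarrow> (L - 0 * c) / 1) (at_left 1)"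
      by (intro tendsto_intros g r0 r1) simp
    then show "(f \<longlongrightarrow> L) (at_left 1)" using ev2 by (simp add: tendsto_cong)
  qed
  have "(\<lambda>L. (g \<longlongrightarrow> L) (at_left 1)) = (\<lambda>L. (f \<longlongrightarrow> L) (at_left 1))" using iff by blast
  then show ?thesis by (simp add: t2_space_class.Lim_def)
qed

context curv_setup
begin

lemma trace_Q:
  assumes r: "\<bar>r\<bar> < 1" and z: "cmod z = 1"
  shows "trace_on M (\<lambda>x. defect_on M Q (inv_on M (\<lambda>y. y - (complex_of_real r * z) *\<^sub>C adjoint_on M Q y)
            (inv_on M (\<lambda>y. y - (complex_of_real r * cnj z) *\<^sub>C Q y) (defect_on M Q x))))
       = of_nat (card Eb) + complex_of_real (r\<^sup>2) * (\<Sum>e\<in>Eb. cinner (AT r z e) e)"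
    (is "trace_on M ?A = _")
proof -
  have A_eq: "?A x = (0, snd x + complex_of_real (r\<^sup>2) *\<^sub>C AT r z (snd x))" if "x \<in> M" for x
    by (rule AQ_eq[OF r z that])
  have ATl: "clin (AT r z)" by (rule AT_lin[OF r z])
  have ATh: "herm (AT r z)" by (rule AT_herm[OF r z])
  have sndR: "x \<in> M \<Longrightarrow> snd x \<in> R" for x by (cases x) (simp add: mem_M)
  have inR: "x \<in> M \<Longrightarrow> snd x + complex_of_real (r\<^sup>2) *\<^sub>C AT r z (snd x) \<in> R" for x
    using sndR by (simp add: R_add R_scale AT_R)
  define E' where "E' = (\<lambda>e. (0::'a, e)) ` Eb"
  have "trace_on M ?A = (\<Sum>e\<in>E'. cinner (?A e) e)"
  proof (rule trace_on_eq[OF M_sub])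
    show "x \<in> M \<Longrightarrow> ?A x \<in> M" for x using A_eq inR by (simp add: mem_M)
    show "lin_on M ?A"
      unfolding lin_on_def
    proof (intro conjI ballI allI)
      fix x y assume "x \<in> M" "y \<in> M"
      moreover then have "x + y \<in> M" using M_sub by (simp add: complex_vector.subspace_add)
      ultimately show "?A (x + y) = ?A x + ?A y"
        by (simp add: A_eq clin_add[OF ATl] complex_vector.scale_right_distrib)
    next
      fix c x assume xM: "x \<in> M"
      then have cxM: "c *\<^sub>C x \<in> M" using M_sub by (simp add: complex_vector.subspace_scale)
      show "?A (c *\<^sub>C x) = c *\<^sub>C ?A x"
        unfolding A_eq[OF cxM] A_eq[OF xM]
        by (cases x) (simp add: clin_scaleC[OF ATl] scaleC_pair complex_vector.scale_right_distrib
            complex_vector.scale_left_commute)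
    qed
    show "herm_on M ?A"
      unfolding herm_on_def
    proof (intro ballI)
      fix x y assume "x \<in> M" "y \<in> M"
      then show "cinner (?A x) y = cinner x (?A y)"
        using ATh by (cases x, cases y) (simp add: A_eq cinner_pair cinner_add_left cinner_add_right
            cinner_scaleC_left cinner_scaleC_right herm_def)
    qed
    show "finite E'" using Eb(1) by (simp add: E'_def)
    show "E' \<subseteq> M" using Eb(2) by (auto simp: E'_def mem_M)
    show "corthonormal E'"
      using Eb(3) by (auto simp: E'_def corthonormal_def cinner_pair)
    show "?A ` M \<subseteq> cspan E'"
    proof
      fix v assume "v \<in> ?A ` M"
      then obtain x where x: "x \<in> M" "v = ?A x" by blast
      have "snd x + complex_of_real (r\<^sup>2) *\<^sub>C AT r z (snd x) \<in> cspan Eb" using inR[OF x(1)] Eb(4) by blast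
      then have "(\<lambda>e. (0::'a, e)) ` {snd x + complex_of_real (r\<^sup>2) *\<^sub>C AT r z (snd x)} \<subseteq> cspan E'"
        using module_hom.spans_image[OF lin_Pair0[unfolded linear_iff_module_hom], of "{_}" Eb]
        unfolding E'_def cspan_raw_def by blast
      then show "v \<in> cspan E'" using x A_eq by simp
    qed
  qed
  also have "\<dots> = (\<Sum>e\<in>Eb. cinner (?A (0, e)) (0, e))"
    unfolding E'_def by (rule sum.reindex_cong[where l="\<lambda>e. (0::'a, e)"]) (auto simp: inj_on_def)
  also have "\<dots> = (\<Sum>e\<in>Eb. 1 + complex_of_real (r\<^sup>2) * cinner (AT r z e) e)"
  proof (rule sum.cong[OF refl])
    fix e assume e: "e \<in> Eb"
    then have "(0, e) \<in> M" using Eb(2) by (auto simp: mem_M)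
    then show "cinner (?A (0, e)) (0, e) = 1 + complex_of_real (r\<^sup>2) * cinner (AT r z e) e"
      using A_eq corth_one[OF Eb(3) e] by (simp add: cinner_pair cinner_add_left cinner_scaleC_left)
  qed
  also have "\<dots> = of_nat (card Eb) + complex_of_real (r\<^sup>2) * (\<Sum>e\<in>Eb. cinner (AT r z e) e)"
    by (simp add: sum.distrib sum_distrib_left)
  finally show ?thesis .
qed

lemma k_eq:
  assumes z: "cmod z = 1"
  shows "Lim (at_left 1) (\<lambda>r. complex_of_real (1 - r\<^sup>2) * trace_on M (\<lambda>x. defect_on M Q (inv_on M (\<lambda>y. y - (complex_of_real r * z) *\<^sub>C adjoint_on M Q y)
            (inv_on M (\<lambda>y. y - (complex_of_real r * cnj z) *\<^sub>C Q y) (defect_on M Q x)))))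
       = Lim (at_left 1) (\<lambda>r. complex_of_real (1 - r\<^sup>2) * trace_on UNIV (\<lambda>x. D (inv_on UNIV (\<lambda>y. y - (complex_of_real r * z) *\<^sub>C Ts y)
            (inv_on UNIV (\<lambda>y. y - (complex_of_real r * cnj z) *\<^sub>C T y) (D x)))))"
proof (rule Lim_rel[where c="of_nat (card Eb)"])
  have ev: "eventually (\<lambda>r::real. r \<in> {0<..<1}) (at_left 1)"
    by (rule eventually_at_left_real) simp
  show "eventually (\<lambda>r. complex_of_real (1 - r\<^sup>2) * trace_on M (\<lambda>x. defect_on M Q (inv_on M (\<lambda>y. y - (complex_of_real r * z) *\<^sub>C adjoint_on M Q y)
            (inv_on M (\<lambda>y. y - (complex_of_real r * cnj z) *\<^sub>C Q y) (defect_on M Q x))))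
     = complex_of_real (r\<^sup>2) * (complex_of_real (1 - r\<^sup>2) * trace_on UNIV (\<lambda>x. D (inv_on UNIV (\<lambda>y. y - (complex_of_real r * z) *\<^sub>C Ts y)
            (inv_on UNIV (\<lambda>y. y - (complex_of_real r * cnj z) *\<^sub>C T y) (D x)))))
       + complex_of_real (1 - r\<^sup>2) * of_nat (card Eb)) (at_left 1)"
    using ev
  proof eventually_elim
    case (elim r)
    then have r: "\<bar>r\<bar> < 1" by simp
    have tT: "trace_on UNIV (\<lambda>x. D (inv_on UNIV (\<lambda>y. y - (complex_of_real r * z) *\<^sub>C Ts y)
            (inv_on UNIV (\<lambda>y. y - (complex_of_real r * cnj z) *\<^sub>C T y) (D x)))) = (\<Sum>e\<in>Eb. cinner (AT r z e) e)"
      using trace_T[OF r z] unfolding AT_def Uw_def Vw_def .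
    show ?case unfolding tT trace_Q[OF r z] by (simp add: algebra_simps)
  qed
qed

lemma curv_eq: "curvature_on M Q = curvature_on UNIV T"
proof -
  have "(\<lambda>t. Lim (at_left 1) (\<lambda>r. complex_of_real (1 - r\<^sup>2) * trace_on M (\<lambda>x. defect_on M Q (inv_on M (\<lambda>y. y - (complex_of_real r * cis t) *\<^sub>C adjoint_on M Q y)
            (inv_on M (\<lambda>y. y - (complex_of_real r * cnj (cis t)) *\<^sub>C Q y) (defect_on M Q x))))))
      = (\<lambda>t. Lim (at_left 1) (\<lambda>r. complex_of_real (1 - r\<^sup>2) * trace_on UNIV (\<lambda>x. D (inv_on UNIV (\<lambda>y. y - (complex_of_real r * cis t) *\<^sub>C Ts y)
            (inv_on UNIV (\<lambda>y. y - (complex_of_real r * cnj (cis t)) *\<^sub>C T y) (D x))))))"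
    by (rule ext) (rule k_eq, simp)
  then show ?thesis unfolding curvature_on_def Let_def by simp
qed

end

context curv_setup
begin

lemma Q_fst: "Q v = (fst (Q v), 0)" by (cases v) (simp add: Q_def)

lemma Q_pi: "partial_isometry_on M Q"
  unfolding partial_isometry_on_def
proof (intro conjI ballI impI)
  show "bop_on M Q"
    unfolding bop_on_def
  proof (intro conjI)
    show "\<forall>x\<in>M. Q x \<in> M" by (simp add: Q_M)
    show "\<forall>x\<in>M. \<forall>y\<in>M. Q (x + y) = Q x + Q y" by (simp add: Q_lin clin_add)
    show "\<forall>c. \<forall>x\<in>M. Q (c *\<^sub>C x) = c *\<^sub>C Q x" by (simp add: Q_lin clin_scaleC)
    obtain K where K: "\<And>x. norm (D x) \<le> K * norm x" using D_bd by blast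
    have "norm (Q v) \<le> (1 + \<bar>K\<bar>) * norm v" for v
    proof -
      obtain a b where ab: "v = (a, b)" by (cases v)
      have "norm (Q v) = norm (T a + D b)" by (simp add: ab Q_def norm_Pair)
      also have "\<dots> \<le> norm (T a) + norm (D b)" by (rule norm_triangle_ineq)
      also have "\<dots> \<le> norm a + \<bar>K\<bar> * norm b"
        using T_contr[of a] K[of b] by (smt (verit) abs_ge_self mult_right_mono norm_ge_zero)
      also have "\<dots> \<le> norm v + \<bar>K\<bar> * norm v"
        using norm_fst_le[of a b] norm_snd_le[of b a] by (simp add: ab add_mono mult_left_mono)
      finally show ?thesis by (simp add: algebra_simps)
    qed
    then show "\<exists>K. \<forall>x\<in>M. norm (Q x) \<le> K * norm x" by blast
  qed
next
  fix x assume xM: "x \<in> M" and orth: "\<forall>y\<in>M. Q y = 0 \<longrightarrow> cinner x y = 0"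
  define y where "y = x - Qs (Q x)"
  have yM: "y \<in> M" unfolding y_def by (rule complex_vector.subspace_diff[OF M_sub xM Qs_M])
  have "Q y = Q x - Q (Qs (Q x))" by (simp add: y_def Q_lin clin_diff)
  also have "Q (Qs (Q x)) = Q x" using Q_fst[of x] by (simp add: QQs)
  finally have "Q y = 0" by simp
  then have "cinner x y = 0" using orth yM by blast
  then have "cinner x x = cinner x (Qs (Q x))" by (simp add: y_def cinner_diff_right)
  also have "\<dots> = cinner (Q x) (Q x)" by (simp add: Q_adj)
  finally have "Re (cinner x x) = Re (cinner (Q x) (Q x))" by simp
  then have "(norm x)\<^sup>2 = (norm (Q x))\<^sup>2" by (simp add: Re_cinner_self_norm)
  then show "norm (Q x) = norm x" by (simp add: power2_eq_iff_nonneg)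
qed

lemma rank3: "rank_on M (\<lambda>v. v - Q (adjoint_on M Q v)) = rank_on UNIV (\<lambda>x. x - T (Ts x))"
proof (rule rank_on_transfer[OF lin_Pair0])
  show "inj_on (\<lambda>b. (0::'a, b)) (cspan ((\<lambda>x. x - T (Ts x)) ` UNIV))" by (simp add: inj_on_def)
  show "(\<lambda>v. v - Q (adjoint_on M Q v)) ` M = (\<lambda>b. (0::'a, b)) ` ((\<lambda>x. x - T (Ts x)) ` UNIV)"
  proof
    show "(\<lambda>v. v - Q (adjoint_on M Q v)) ` M \<subseteq> (\<lambda>b. (0::'a, b)) ` ((\<lambda>x. x - T (Ts x)) ` UNIV)"
      by (auto simp: defQ PQ_def mem_M split: prod.splits)
    show "(\<lambda>b. (0::'a, b)) ` ((\<lambda>x. x - T (Ts x)) ` UNIV) \<subseteq> (\<lambda>v. v - Q (adjoint_on M Q v)) ` M"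
    proof
      fix v assume "v \<in> (\<lambda>b. (0::'a, b)) ` ((\<lambda>x. x - T (Ts x)) ` UNIV)"
      then obtain b where b: "b \<in> R" "v = (0, b)" by auto
      then have m: "(0, b) \<in> M" by (simp add: mem_M)
      have e: "(0, b) - Q (adjoint_on M Q (0, b)) = v" using b defQ[OF m] by (simp add: PQ_def)
      show "v \<in> (\<lambda>v. v - Q (adjoint_on M Q v)) ` M" by (rule rev_image_eqI[OF m]) (simp only: e)
    qed
  qed
qed

definition "W = {v \<in> M. Q v = 0}"

lemma W_sub: "complex_vector.subspace W"
proof (unfold complex_vector.subspace_def, intro conjI ballI allI)
  show "0 \<in> W" using M_sub by (simp add: W_def complex_vector.subspace_0 clin_zero[OF Q_lin])
  fix x y assume "x \<in> W" "y \<in> W"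
  then show "x + y \<in> W" using M_sub by (simp add: W_def complex_vector.subspace_add clin_add[OF Q_lin])
next
  fix c x assume "x \<in> W"
  then show "c *\<^sub>C x \<in> W" using M_sub by (simp add: W_def complex_vector.subspace_scale clin_scaleC[OF Q_lin])
qed

lemma W_eq: "(\<lambda>v. v - adjoint_on M Q (Q v)) ` M = W"
proof
  show "(\<lambda>v. v - adjoint_on M Q (Q v)) ` M \<subseteq> W"
  proof
    fix u assume "u \<in> (\<lambda>v. v - adjoint_on M Q (Q v)) ` M"
    then obtain v where v: "v \<in> M" "u = v - adjoint_on M Q (Q v)" by blast
    have u: "u = v - Qs (Q v)" using v by (simp add: adjQ Q_M)
    have "u \<in> M" unfolding u by (rule complex_vector.subspace_diff[OF M_sub v(1) Qs_M])
    moreover have "Q u = 0"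
    proof -
      have "Q u = Q v - Q (Qs (Q v))" by (simp add: u Q_lin clin_diff)
      also have "Q (Qs (Q v)) = Q v" using Q_fst[of v] by (simp add: QQs)
      finally show ?thesis by simp
    qed
    ultimately show "u \<in> W" by (simp add: W_def)
  qed
  show "W \<subseteq> (\<lambda>v. v - adjoint_on M Q (Q v)) ` M"
  proof
    fix u assume "u \<in> W"
    then have u: "u \<in> M" "Q u = 0" by (auto simp: W_def)
    have e: "u - adjoint_on M Q (Q u) = u"
      using u complex_vector.subspace_0[OF M_sub] by (simp add: adjQ clin_zero[OF Qs_lin])
    show "u \<in> (\<lambda>v. v - adjoint_on M Q (Q v)) ` M" by (rule rev_image_eqI[OF u(1)]) (simp only: e)
  qed
qed

lemma rank4: "rank_on M (\<lambda>v. v - adjoint_on M Q (Q v)) = rank_on UNIV (\<lambda>x. x - Ts (T x))"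
proof (rule rank_on_transfer[OF lin_fst, symmetric])
  show "inj_on fst (cspan ((\<lambda>v. v - adjoint_on M Q (Q v)) ` M))"
    unfolding W_eq complex_vector.span_eq_iff[THEN iffD2, OF W_sub]
  proof (rule inj_onI)
    fix u v assume uv: "u \<in> W" "v \<in> W" "fst u = fst v"
    then have "u - v \<in> W" using W_sub by (simp add: complex_vector.subspace_diff)
    moreover obtain d where d: "u - v = (0, d)" using uv(3) by (cases u, cases v) auto
    ultimately have dW: "(0, d) \<in> W" by simp
    then have "d \<in> R" "D d = 0" by (auto simp: W_def mem_M Q_def clin_zero[OF T_lin] zero_prod_def)
    then obtain w where w: "d = D w" using rangeD_eq by auto
    then have "D (D w) = 0" using \<open>D d = 0\<close> by simp
    then have "d = 0" using D_inj_range w by simp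
    then show "u = v" using d by (simp add: zero_prod_def[symmetric])
  qed
  show "(\<lambda>x. x - Ts (T x)) ` UNIV = fst ` ((\<lambda>v. v - adjoint_on M Q (Q v)) ` M)"
  proof
    show "(\<lambda>x. x - Ts (T x)) ` UNIV \<subseteq> fst ` ((\<lambda>v. v - adjoint_on M Q (Q v)) ` M)"
    proof
      fix y assume "y \<in> (\<lambda>x. x - Ts (T x)) ` UNIV"
      then obtain x where x: "y = x - Ts (T x)" by blast
      have xM: "(x, 0) \<in> M" by (simp add: mem_M zero_R)
      have q: "Q (x, 0) = (T x, 0)" by (simp add: Q_def clin_zero[OF D_lin])
      have a: "adjoint_on M Q (T x, 0) = (Ts (T x), D (T x))"
        using adjQ[of "(T x, 0)"] by (simp add: mem_M zero_R Qs_def)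
      have e: "fst ((x, 0) - adjoint_on M Q (Q (x, 0))) = y"
        by (simp add: q a x)
      show "y \<in> fst ` ((\<lambda>v. v - adjoint_on M Q (Q v)) ` M)"
        by (rule rev_image_eqI[OF imageI[OF xM]]) (simp only: e)
    qed
    show "fst ` ((\<lambda>v. v - adjoint_on M Q (Q v)) ` M) \<subseteq> (\<lambda>x. x - Ts (T x)) ` UNIV"
    proof
      fix y assume "y \<in> fst ` ((\<lambda>v. v - adjoint_on M Q (Q v)) ` M)"
      then obtain v where v: "v \<in> M" "y = fst (v - adjoint_on M Q (Q v))" by blast
      obtain x d where xd: "v = (x, d)" by (cases v)
      have "d \<in> R" using v xd by (simp add: mem_M)
      then obtain b where b: "d = D b" using rangeD_eq by auto
      have "adjoint_on M Q (Q v) = Qs (Q v)" by (rule adjQ[OF Q_M])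
      moreover have "Q v = (T x + D d, 0)" by (simp add: xd Q_def)
      ultimately have "y = x - Ts (T x + D d)" using v xd by (simp add: Qs_def)
      also have "\<dots> = (x - Ts b) - Ts (T (x - Ts b))"
        by (simp add: b D_DD clin_add[OF Ts_lin] clin_diff[OF Ts_lin] clin_diff[OF T_lin])
      finally show "y \<in> (\<lambda>x. x - Ts (T x)) ` UNIV" by blast
    qed
  qed
qed

lemma main: "partial_isometry_on M Q
    \<and> curvature_on M Q = curvature_on UNIV T
    \<and> rank_on M (\<lambda>v. v - Q (adjoint_on M Q v)) = rank_on UNIV (\<lambda>x. x - T (adjoint_on UNIV T x))
    \<and> rank_on M (\<lambda>v. v - adjoint_on M Q (Q v)) = rank_on UNIV (\<lambda>x. x - adjoint_on UNIV T (T x))"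
  using Q_pi curv_eq rank3 rank4 by blast

lemmas main' = main[unfolded M_def Q_def]

end

theorem proposition1:
  fixes T :: "'a::chilbert \<Rightarrow> 'a"
  assumes bounded: "bop_on UNIV T"
    and contraction: "\<forall>x. norm (T x) \<le> norm x"
    and finite_rank: "rank_on UNIV (defect_on UNIV T) \<noteq> \<infinity>"
  defines "M \<equiv> (UNIV :: 'a set) \<times> range (\<lambda>x. x - T (adjoint_on UNIV T x))"
    and "Q \<equiv> (\<lambda>(x, y). (T x + defect_on UNIV T y, 0 :: 'a))"
  shows "partial_isometry_on M Q
    \<and> curvature_on M Q = curvature_on UNIV T
    \<and> rank_on M (\<lambda>v. v - Q (adjoint_on M Q v)) = rank_on UNIV (\<lambda>x. x - T (adjoint_on UNIV T x))
    \<and> rank_on M (\<lambda>v. v - adjoint_on M Q (Q v)) = rank_on UNIV (\<lambda>x. x - adjoint_on UNIV T (T x))"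
proof -
  have "curv_setup T" using assms by (simp add: curv_setup_def)
  then show ?thesis unfolding M_def Q_def by (rule curv_setup.main')
qed

end
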